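(* Let $\mathcal C$ be a $\tau$-graded category with shifts and let $S$ be a homogeneous simple object. Put $L_S=\{a\in H: S\langle a\rangle\cong S \text{ (via a degree-1 isomorphism)}\}$. Then $L_S$ is a subgroup of $\ker(\tau)$. Fix coset representatives $(h_i)_{i\in I}$ with $H=\coprod_{i\in I}h_iL_S$, and let $H$ act on $I$ by $h_{ai}L_S=ah_iL_S$. For all $i\in I$, $a\in H$ the $R$-module $\mathrm{Hom}^a_{\mathcal C}(S\langle h_i\rangle,S\langle h_{ai}\rangle)$ is free of rank one; choose generators $f^a_{S,i}$ with $f^1_{S,i}=\mathrm{id}_{S\langle h_i\rangle}$. Then there is a unique function $\psi_S\colon H^2\to\mathrm{Hom}_{\mathrm{Set}}(H/L_S,R^\times)$ with $$f^{ab}_{S,i}=\psi_S(a,b)(h_iL_S)\cdot f^a_{S,bi}\circ f^b_{S,i}\quad\text{for all }a,b\in H,\ i\in I,$$ and $\psi_S$ is a normalised 2-cocycle.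
   Context: $R$ is a nonzero commutative ring, $H,G$ groups, $\tau\colon H\to G$ a homomorphism. A $\tau$-graded category is an $R$-linear category $\mathcal C$ with $\mathrm{Hom}(X,Y)=\bigoplus_{h\in H}\mathrm{Hom}^h(X,Y)$, identities of degree 1, composition $\mathrm{Hom}^{h'}\times\mathrm{Hom}^h\to\mathrm{Hom}^{h'h}$, such that the degree-1 subcategory $\mathcal C^1$ is $G$-graded (disjoint full subcategories $\mathcal C_g$, every object a finite direct sum of objects of the $\mathcal C_g$; objects of $\mathcal C_g$ are homogeneous, $|X|=g$) and $\mathrm{Hom}^h(X,Y)=0$ for homogeneous $X,Y$ unless $|Y|=\tau(h)|X|$. A shift of $X$ by $a\in H$ is an object $X\langle a\rangle$ with a degree-$a$ isomorphism $r_{X,a}\colon X\to X\langle a\rangle$; $\mathcal C$ has shifts if these exist for all $X,a$ (fix a choice). An object $S$ is simple if $\mathrm{End}_{\mathcal C^1}(S)\cong R$ as $R$-algebras. $\mathrm{Hom}_{\mathrm{Set}}(H/L,R^\times)$ is an abelian group under pointwise product with right $H$-action $(f\triangleleft h)(kL)=f(hkL)$; $1$ is the constant function; a normalised 2-cocycle is $\psi\colon H^2\to\mathrm{Hom}_{\mathrm{Set}}(H/L,R^\times)$ with $\psi(1,h)=\psi(h,1)=1$ and $\psi(b,c)\psi(ab,c)^{-1}\psi(a,bc)(\psi(a,b)\triangleleft c)^{-1}=1$. *)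

theory Defs
  imports "HOL-Algebra.Algebra"
begin

text \<open>A tau-graded R-linear category, represented by its homogeneous pieces inside
  the full Hom modules. Objects are all elements of type 'o.
  HomM U Y is the R-module Hom(U,Y); Hg U Y h is the submodule Hom^h(U,Y);
  cmp U Y Z g f is the composite g o f of f : U -> Y and g : Y -> Z;
  idm U is the identity; Hmg is the set of homogeneous objects (objects of some C_g)
  and odeg U is the degree |U| of a homogeneous object U.\<close>

record ('o, 'm, 'r, 'h, 'g) gcat =
  HomM :: "'o \<Rightarrow> 'o \<Rightarrow> ('r, 'm) module"
  Hg   :: "'o \<Rightarrow> 'o \<Rightarrow> 'h \<Rightarrow> 'm set"
  cmp :: "'o \<Rightarrow> 'o \<Rightarrow> 'o \<Rightarrow> 'm \<Rightarrow> 'm \<Rightarrow> 'm"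
  idm  :: "'o \<Rightarrow> 'm"
  Hmg  :: "'o set"
  odeg :: "'o \<Rightarrow> 'g"

definition R_linear_cat ::
  "('r, 'a) ring_scheme \<Rightarrow> ('o, 'm, 'r, 'h, 'g, 'z) gcat_scheme \<Rightarrow> bool" where
  "R_linear_cat R C \<longleftrightarrow>
     (\<forall>U Y. module R (HomM C U Y)) \<and>
     (\<forall>U. idm C U \<in> carrier (HomM C U U)) \<and>
     (\<forall>U Y Z f g. f \<in> carrier (HomM C U Y) \<longrightarrow> g \<in> carrier (HomM C Y Z) \<longrightarrow>
        cmp C U Y Z g f \<in> carrier (HomM C U Z)) \<and>
     (\<forall>W U Y Z f g k. f \<in> carrier (HomM C W U) \<longrightarrow> g \<in> carrier (HomM C U Y) \<longrightarrow>
        k \<in> carrier (HomM C Y Z) \<longrightarrow>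
        cmp C W Y Z k (cmp C W U Y g f) = cmp C W U Z (cmp C U Y Z k g) f) \<and>
     (\<forall>U Y f. f \<in> carrier (HomM C U Y) \<longrightarrow>
        cmp C U Y Y (idm C Y) f = f \<and> cmp C U U Y f (idm C U) = f) \<and>
     (\<forall>U Y Z f f' g. f \<in> carrier (HomM C U Y) \<longrightarrow> f' \<in> carrier (HomM C U Y) \<longrightarrow>
        g \<in> carrier (HomM C Y Z) \<longrightarrow>
        cmp C U Y Z g (f \<oplus>\<^bsub>HomM C U Y\<^esub> f') =
          cmp C U Y Z g f \<oplus>\<^bsub>HomM C U Z\<^esub> cmp C U Y Z g f') \<and>
     (\<forall>U Y Z f g g'. f \<in> carrier (HomM C U Y) \<longrightarrow> g \<in> carrier (HomM C Y Z) \<longrightarrow>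
        g' \<in> carrier (HomM C Y Z) \<longrightarrow>
        cmp C U Y Z (g \<oplus>\<^bsub>HomM C Y Z\<^esub> g') f =
          cmp C U Y Z g f \<oplus>\<^bsub>HomM C U Z\<^esub> cmp C U Y Z g' f) \<and>
     (\<forall>U Y Z f g r. f \<in> carrier (HomM C U Y) \<longrightarrow> g \<in> carrier (HomM C Y Z) \<longrightarrow>
        r \<in> carrier R \<longrightarrow>
        cmp C U Y Z g (r \<odot>\<^bsub>HomM C U Y\<^esub> f) = r \<odot>\<^bsub>HomM C U Z\<^esub> cmp C U Y Z g f \<and>
        cmp C U Y Z (r \<odot>\<^bsub>HomM C Y Z\<^esub> g) f = r \<odot>\<^bsub>HomM C U Z\<^esub> cmp C U Y Z g f)"

definition hom_direct_sum ::
  "('r, 'a) ring_scheme \<Rightarrow> ('h, 'b) monoid_scheme \<Rightarrow> ('o, 'm, 'r, 'h, 'g, 'z) gcat_scheme \<Rightarrow> bool" where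
  "hom_direct_sum R H C \<longleftrightarrow>
     (\<forall>U Y h. h \<in> carrier H \<longrightarrow> submodule (Hg C U Y h) R (HomM C U Y)) \<and>
     (\<forall>U Y f. f \<in> carrier (HomM C U Y) \<longrightarrow>
        (\<exists>F \<phi>. finite F \<and> F \<subseteq> carrier H \<and> (\<forall>h\<in>F. \<phi> h \<in> Hg C U Y h) \<and>
           f = finsum (HomM C U Y) \<phi> F)) \<and>
     (\<forall>U Y F \<phi>. finite F \<longrightarrow> F \<subseteq> carrier H \<longrightarrow> (\<forall>h\<in>F. \<phi> h \<in> Hg C U Y h) \<longrightarrow>
        finsum (HomM C U Y) \<phi> F = \<zero>\<^bsub>HomM C U Y\<^esub> \<longrightarrow> (\<forall>h\<in>F. \<phi> h = \<zero>\<^bsub>HomM C U Y\<^esub>))"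

definition deg1_direct_sum_of_homog ::
  "('h, 'b) monoid_scheme \<Rightarrow> ('o, 'm, 'r, 'h, 'g, 'z) gcat_scheme \<Rightarrow> 'o \<Rightarrow> bool" where
  "deg1_direct_sum_of_homog H C U \<longleftrightarrow>
     (\<exists>(n::nat) Y \<iota> \<pi>. (\<forall>k<n. Y k \<in> Hmg C \<and> \<iota> k \<in> Hg C (Y k) U \<one>\<^bsub>H\<^esub> \<and>
                                \<pi> k \<in> Hg C U (Y k) \<one>\<^bsub>H\<^esub>) \<and>
        (\<forall>j<n. \<forall>k<n. cmp C (Y k) U (Y j) (\<pi> j) (\<iota> k) =
            (if j = k then idm C (Y k) else \<zero>\<^bsub>HomM C (Y k) (Y j)\<^esub>)) \<and>
        finsum (HomM C U U) (\<lambda>k. cmp C U (Y k) U (\<iota> k) (\<pi> k)) {..<n} = idm C U)"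

definition tau_graded_cat ::
  "('r, 'a) ring_scheme \<Rightarrow> ('h, 'b) monoid_scheme \<Rightarrow> ('g, 'c) monoid_scheme \<Rightarrow> ('h \<Rightarrow> 'g)
     \<Rightarrow> ('o, 'm, 'r, 'h, 'g, 'z) gcat_scheme \<Rightarrow> bool" where
  "tau_graded_cat R H G \<tau> C \<longleftrightarrow>
     R_linear_cat R C \<and> hom_direct_sum R H C \<and>
     (\<forall>U. idm C U \<in> Hg C U U \<one>\<^bsub>H\<^esub>) \<and>
     (\<forall>U Y Z h h' f g. h \<in> carrier H \<longrightarrow> h' \<in> carrier H \<longrightarrow>
        f \<in> Hg C U Y h \<longrightarrow> g \<in> Hg C Y Z h' \<longrightarrow> cmp C U Y Z g f \<in> Hg C U Z (h' \<otimes>\<^bsub>H\<^esub> h)) \<and>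
     (\<forall>U\<in>Hmg C. odeg C U \<in> carrier G) \<and>
     (\<forall>U. deg1_direct_sum_of_homog H C U) \<and>
     (\<forall>U\<in>Hmg C. \<forall>Y\<in>Hmg C. \<forall>h\<in>carrier H.
        odeg C Y \<noteq> \<tau> h \<otimes>\<^bsub>G\<^esub> odeg C U \<longrightarrow> Hg C U Y h \<subseteq> {\<zero>\<^bsub>HomM C U Y\<^esub>})"

text \<open>f : U -> Y is an isomorphism of degree a (its inverse taken in the full category).\<close>
definition iso_deg ::
  "('o, 'm, 'r, 'h, 'g, 'z) gcat_scheme \<Rightarrow> 'h \<Rightarrow> 'o \<Rightarrow> 'o \<Rightarrow> 'm \<Rightarrow> bool" where
  "iso_deg C a U Y f \<longleftrightarrow> f \<in> Hg C U Y a \<and>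
     (\<exists>g \<in> carrier (HomM C Y U). cmp C U Y U g f = idm C U \<and> cmp C Y U Y f g = idm C Y)"

text \<open>A (fixed) choice of shifts: sh U a = U<a>, rs U a = r_{U,a}.\<close>
definition has_shifts ::
  "('h, 'b) monoid_scheme \<Rightarrow> ('o, 'm, 'r, 'h, 'g, 'z) gcat_scheme
     \<Rightarrow> ('o \<Rightarrow> 'h \<Rightarrow> 'o) \<Rightarrow> ('o \<Rightarrow> 'h \<Rightarrow> 'm) \<Rightarrow> bool" where
  "has_shifts H C sh rs \<longleftrightarrow> (\<forall>U. \<forall>a\<in>carrier H. iso_deg C a U (sh U a) (rs U a))"

definition simple_obj ::
  "('r, 'a) ring_scheme \<Rightarrow> ('h, 'b) monoid_scheme \<Rightarrow> ('o, 'm, 'r, 'h, 'g, 'z) gcat_scheme \<Rightarrow> 'o \<Rightarrow> bool" where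
  "simple_obj R H C S \<longleftrightarrow>
     (\<exists>\<phi>. bij_betw \<phi> (carrier R) (Hg C S S \<one>\<^bsub>H\<^esub>) \<and> \<phi> \<one>\<^bsub>R\<^esub> = idm C S \<and>
        (\<forall>r\<in>carrier R. \<forall>s\<in>carrier R.
           \<phi> (r \<oplus>\<^bsub>R\<^esub> s) = \<phi> r \<oplus>\<^bsub>HomM C S S\<^esub> \<phi> s \<and>
           \<phi> (r \<otimes>\<^bsub>R\<^esub> s) = cmp C S S S (\<phi> r) (\<phi> s) \<and>
           \<phi> (r \<otimes>\<^bsub>R\<^esub> s) = r \<odot>\<^bsub>HomM C S S\<^esub> \<phi> s))"

definition stab ::
  "('h, 'b) monoid_scheme \<Rightarrow> ('o, 'm, 'r, 'h, 'g, 'z) gcat_scheme \<Rightarrow> ('o \<Rightarrow> 'h \<Rightarrow> 'o) \<Rightarrow> 'o \<Rightarrow> 'h set" where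
  "stab H C sh S = {a \<in> carrier H. \<exists>f. iso_deg C \<one>\<^bsub>H\<^esub> (sh S a) S f}"

definition free_generator ::
  "('r, 'a) ring_scheme \<Rightarrow> ('r, 'm, 'c) module_scheme \<Rightarrow> 'm set \<Rightarrow> 'm \<Rightarrow> bool" where
  "free_generator R M N g \<longleftrightarrow> g \<in> N \<and> bij_betw (\<lambda>r. r \<odot>\<^bsub>M\<^esub> g) (carrier R) N"

definition left_cosets_of :: "('h, 'b) monoid_scheme \<Rightarrow> 'h set \<Rightarrow> 'h set set" where
  "left_cosets_of H L = {l_coset H x L | x. x \<in> carrier H}"

definition coset_reps :: "('h, 'b) monoid_scheme \<Rightarrow> 'h set \<Rightarrow> 'i set \<Rightarrow> ('i \<Rightarrow> 'h) \<Rightarrow> bool" where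
  "coset_reps H L I hr \<longleftrightarrow> (\<forall>i\<in>I. hr i \<in> carrier H) \<and>
     (\<forall>x\<in>carrier H. \<exists>!i. i \<in> I \<and> x \<in> l_coset H (hr i) L)"

definition coset_act :: "('h, 'b) monoid_scheme \<Rightarrow> 'h set \<Rightarrow> 'i set \<Rightarrow> ('i \<Rightarrow> 'h) \<Rightarrow> 'h \<Rightarrow> 'i \<Rightarrow> 'i" where
  "coset_act H L I hr a i = (THE j. j \<in> I \<and> l_coset H (hr j) L = l_coset H (a \<otimes>\<^bsub>H\<^esub> hr i) L)"

text \<open>psi : H^2 -> Hom_Set(H/L, R^x) is a normalised 2-cocycle; the right action is
  (f <| h)(kL) = f(hkL), i.e. (f <| h)(C) = f(h <# C).\<close>
definition normalised_2cocycle ::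
  "('r, 'a) ring_scheme \<Rightarrow> ('h, 'b) monoid_scheme \<Rightarrow> 'h set \<Rightarrow> ('h \<Rightarrow> 'h \<Rightarrow> 'h set \<Rightarrow> 'r) \<Rightarrow> bool" where
  "normalised_2cocycle R H L \<psi> \<longleftrightarrow>
     (\<forall>a\<in>carrier H. \<forall>b\<in>carrier H. \<forall>C\<in>left_cosets_of H L. \<psi> a b C \<in> Units R) \<and>
     (\<forall>h\<in>carrier H. \<forall>C\<in>left_cosets_of H L. \<psi> \<one>\<^bsub>H\<^esub> h C = \<one>\<^bsub>R\<^esub> \<and> \<psi> h \<one>\<^bsub>H\<^esub> C = \<one>\<^bsub>R\<^esub>) \<and>
     (\<forall>a\<in>carrier H. \<forall>b\<in>carrier H. \<forall>c\<in>carrier H. \<forall>C\<in>left_cosets_of H L.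
        \<psi> b c C \<otimes>\<^bsub>R\<^esub> inv\<^bsub>R\<^esub> (\<psi> (a \<otimes>\<^bsub>H\<^esub> b) c C) \<otimes>\<^bsub>R\<^esub> \<psi> a (b \<otimes>\<^bsub>H\<^esub> c) C
          \<otimes>\<^bsub>R\<^esub> inv\<^bsub>R\<^esub> (\<psi> a b (l_coset H c C)) = \<one>\<^bsub>R\<^esub>)"

end

theory Submission
  imports Defs
begin

lemma (in abelian_group) ag1: "x \<in> carrier G \<Longrightarrow> y \<in> carrier G \<Longrightarrow> (x \<ominus> (x \<oplus> y)) \<oplus> y = \<zero>"
  by (simp add: a_minus_def minus_add a_assoc[symmetric] r_neg) (simp add: a_assoc l_neg)
lemma (in abelian_group) ag2: "x \<in> carrier G \<Longrightarrow> y \<in> carrier G \<Longrightarrow> x \<ominus> y = \<zero> \<Longrightarrow> x = y"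
  by (metis a_minus_def add.inv_solve_right l_zero minus_closed zero_closed add.inv_inv)

lemma fg_inj: "free_generator R M N g \<Longrightarrow> r \<in> carrier R \<Longrightarrow> s \<in> carrier R \<Longrightarrow>
   r \<odot>\<^bsub>M\<^esub> g = s \<odot>\<^bsub>M\<^esub> g \<Longrightarrow> r = s"
  unfolding free_generator_def bij_betw_def inj_on_def by blast

lemma fg_surj: "free_generator R M N g \<Longrightarrow> k \<in> N \<Longrightarrow> \<exists>r\<in>carrier R. k = r \<odot>\<^bsub>M\<^esub> g"
  unfolding free_generator_def bij_betw_def by blast

lemma fg_in: "free_generator R M N g \<Longrightarrow> g \<in> N"
  unfolding free_generator_def by blast

lemma gen_unit:
  assumes M: "module R M" and NM: "N \<subseteq> carrier M" and g: "free_generator R M N g" and k: "free_generator R M N k"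
    and r: "r \<in> carrier R" and kr: "k = r \<odot>\<^bsub>M\<^esub> g"
  shows "r \<in> Units R"
proof -
  interpret module R M by (rule M)
  obtain d where d: "d \<in> carrier R" "g = d \<odot>\<^bsub>M\<^esub> k" using fg_surj[OF k fg_in[OF g]] by blast
  have kc: "k \<in> carrier M" using fg_in[OF k] NM by blast
  have "(r \<otimes>\<^bsub>R\<^esub> d) \<odot>\<^bsub>M\<^esub> k = \<one>\<^bsub>R\<^esub> \<odot>\<^bsub>M\<^esub> k"
    using kr d r kc smult_assoc1 by simp
  then have "r \<otimes>\<^bsub>R\<^esub> d = \<one>\<^bsub>R\<^esub>" using fg_inj[OF k] r d by simp
  then show ?thesis using r d m_comm unfolding Units_def by auto
qed

definition endo_free0 :: "('r, 'a) ring_scheme \<Rightarrow> ('h, 'b) monoid_scheme \<Rightarrow> ('o, 'm, 'r, 'h, 'g, 'z) gcat_scheme \<Rightarrow> 'o \<Rightarrow> bool" where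
  "endo_free0 R H C Ob \<longleftrightarrow> bij_betw (\<lambda>r. r \<odot>\<^bsub>HomM C Ob Ob\<^esub> idm C Ob) (carrier R) (Hg C Ob Ob \<one>\<^bsub>H\<^esub>)"

lemma (in cring) cocyc_alg:
  assumes "p1 \<in> Units R" "p2 \<in> Units R" "p3 \<in> Units R" "p4 \<in> Units R" "p2 \<otimes> p4 = p3 \<otimes> p1"
  shows "p1 \<otimes> inv p2 \<otimes> p3 \<otimes> inv p4 = \<one>"
proof -
  have c: "p1 \<in> carrier R" "p2 \<in> carrier R" "p3 \<in> carrier R" "p4 \<in> carrier R"
    "inv p2 \<in> carrier R" "inv p4 \<in> carrier R" using assms by auto
  have "p1 \<otimes> inv p2 \<otimes> p3 \<otimes> inv p4 = (p3 \<otimes> p1) \<otimes> (inv p2 \<otimes> inv p4)" using c by (simp add: m_ac)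
  also have "\<dots> = (p2 \<otimes> p4) \<otimes> (inv p2 \<otimes> inv p4)" using assms by simp
  also have "\<dots> = (p2 \<otimes> inv p2) \<otimes> (p4 \<otimes> inv p4)" using c by (simp add: m_ac)
  also have "\<dots> = \<one>" using assms by simp
  finally show ?thesis .
qed

locale ctx =
  fixes R :: "('r, 'a) ring_scheme" and H :: "('h, 'b) monoid_scheme"
    and G :: "('g, 'c) monoid_scheme" and \<tau> :: "'h \<Rightarrow> 'g"
    and C :: "('o, 'm, 'r, 'h, 'g, 'z) gcat_scheme"
  assumes cR: "cring R" and gH: "group H" and tg: "tau_graded_cat R H G \<tau> C"
begin

lemma RL: "R_linear_cat R C" and HD: "hom_direct_sum R H C" using tg unfolding tau_graded_cat_def by auto

lemma modM: "module R (HomM C U Y)" using RL unfolding R_linear_cat_def by auto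
lemma id_carr[simp]: "idm C U \<in> carrier (HomM C U U)" using RL unfolding R_linear_cat_def by auto
lemma cmp_carr[simp]: "f \<in> carrier (HomM C U Y) \<Longrightarrow> g \<in> carrier (HomM C Y Z) \<Longrightarrow>
        cmp C U Y Z g f \<in> carrier (HomM C U Z)" using RL unfolding R_linear_cat_def by auto
lemma assoc: "f \<in> carrier (HomM C W U) \<Longrightarrow> g \<in> carrier (HomM C U Y) \<Longrightarrow>
        k \<in> carrier (HomM C Y Z) \<Longrightarrow>
        cmp C W Y Z k (cmp C W U Y g f) = cmp C W U Z (cmp C U Y Z k g) f"
  using RL unfolding R_linear_cat_def by auto
lemma id_l[simp]: "f \<in> carrier (HomM C U Y) \<Longrightarrow> cmp C U Y Y (idm C Y) f = f"
  using RL unfolding R_linear_cat_def by auto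
lemma id_r[simp]: "f \<in> carrier (HomM C U Y) \<Longrightarrow> cmp C U U Y f (idm C U) = f"
  using RL unfolding R_linear_cat_def by auto
lemma add_r: "f \<in> carrier (HomM C U Y) \<Longrightarrow> f' \<in> carrier (HomM C U Y) \<Longrightarrow>
        g \<in> carrier (HomM C Y Z) \<Longrightarrow>
        cmp C U Y Z g (f \<oplus>\<^bsub>HomM C U Y\<^esub> f') =
          cmp C U Y Z g f \<oplus>\<^bsub>HomM C U Z\<^esub> cmp C U Y Z g f'"
  using RL unfolding R_linear_cat_def by auto
lemma add_l: "f \<in> carrier (HomM C U Y) \<Longrightarrow> g \<in> carrier (HomM C Y Z) \<Longrightarrow>
        g' \<in> carrier (HomM C Y Z) \<Longrightarrow>
        cmp C U Y Z (g \<oplus>\<^bsub>HomM C Y Z\<^esub> g') f =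
          cmp C U Y Z g f \<oplus>\<^bsub>HomM C U Z\<^esub> cmp C U Y Z g' f"
  using RL unfolding R_linear_cat_def by auto
lemma sm_r: "f \<in> carrier (HomM C U Y) \<Longrightarrow> g \<in> carrier (HomM C Y Z) \<Longrightarrow>
        r \<in> carrier R \<Longrightarrow>
        cmp C U Y Z g (r \<odot>\<^bsub>HomM C U Y\<^esub> f) = r \<odot>\<^bsub>HomM C U Z\<^esub> cmp C U Y Z g f"
  using RL unfolding R_linear_cat_def by auto
lemma sm_l: "f \<in> carrier (HomM C U Y) \<Longrightarrow> g \<in> carrier (HomM C Y Z) \<Longrightarrow>
        r \<in> carrier R \<Longrightarrow>
        cmp C U Y Z (r \<odot>\<^bsub>HomM C Y Z\<^esub> g) f = r \<odot>\<^bsub>HomM C U Z\<^esub> cmp C U Y Z g f"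
  using RL unfolding R_linear_cat_def by auto
lemma sub: "h \<in> carrier H \<Longrightarrow> submodule (Hg C U Y h) R (HomM C U Y)"
  using HD unfolding hom_direct_sum_def by auto
lemma decomp: "f \<in> carrier (HomM C U Y) \<Longrightarrow>
        (\<exists>F \<phi>. finite F \<and> F \<subseteq> carrier H \<and> (\<forall>h\<in>F. \<phi> h \<in> Hg C U Y h) \<and>
           f = finsum (HomM C U Y) \<phi> F)"
  using HD unfolding hom_direct_sum_def by auto
lemma uniq: "finite F \<Longrightarrow> F \<subseteq> carrier H \<Longrightarrow> (\<forall>h\<in>F. \<phi> h \<in> Hg C U Y h) \<Longrightarrow>
        finsum (HomM C U Y) \<phi> F = \<zero>\<^bsub>HomM C U Y\<^esub> \<Longrightarrow> h\<in>F \<Longrightarrow> \<phi> h = \<zero>\<^bsub>HomM C U Y\<^esub>"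
  using HD unfolding hom_direct_sum_def by auto
lemma id_deg[simp]: "idm C U \<in> Hg C U U \<one>\<^bsub>H\<^esub>"
  using tg unfolding tau_graded_cat_def by blast
lemma cmp_deg: "h \<in> carrier H \<Longrightarrow> h' \<in> carrier H \<Longrightarrow>
        f \<in> Hg C U Y h \<Longrightarrow> g \<in> Hg C Y Z h' \<Longrightarrow> cmp C U Y Z g f \<in> Hg C U Z (h' \<otimes>\<^bsub>H\<^esub> h)"
  using tg unfolding tau_graded_cat_def by blast

lemma mism: "U \<in> Hmg C \<Longrightarrow> Y \<in> Hmg C \<Longrightarrow> h \<in> carrier H \<Longrightarrow>
        odeg C Y \<noteq> \<tau> h \<otimes>\<^bsub>G\<^esub> odeg C U \<Longrightarrow> Hg C U Y h \<subseteq> {\<zero>\<^bsub>HomM C U Y\<^esub>}"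
  using tg unfolding tau_graded_cat_def by auto
lemma odeg_c: "U \<in> Hmg C \<Longrightarrow> odeg C U \<in> carrier G"
  using tg unfolding tau_graded_cat_def by auto

lemma Hg_carr: "h \<in> carrier H \<Longrightarrow> f \<in> Hg C U Y h \<Longrightarrow> f \<in> carrier (HomM C U Y)"
  using module.submoduleE(1)[OF modM sub] by blast
lemma Hg_sm: "h \<in> carrier H \<Longrightarrow> f \<in> Hg C U Y h \<Longrightarrow> r \<in> carrier R \<Longrightarrow> r \<odot>\<^bsub>HomM C U Y\<^esub> f \<in> Hg C U Y h"
  using module.submoduleE(4)[OF modM sub] by blast
lemma Hg_add: "h \<in> carrier H \<Longrightarrow> f \<in> Hg C U Y h \<Longrightarrow> g \<in> Hg C U Y h \<Longrightarrow> f \<oplus>\<^bsub>HomM C U Y\<^esub> g \<in> Hg C U Y h"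
  using module.submoduleE(5)[OF modM sub] by blast
lemma Hg_neg: "h \<in> carrier H \<Longrightarrow> f \<in> Hg C U Y h \<Longrightarrow> \<ominus>\<^bsub>HomM C U Y\<^esub> f \<in> Hg C U Y h"
  using module.submoduleE(3)[OF modM sub] by blast
lemma Hg_zero: "h \<in> carrier H \<Longrightarrow> \<zero>\<^bsub>HomM C U Y\<^esub> \<in> Hg C U Y h"
proof -
  assume h: "h \<in> carrier H"
  obtain x where "x \<in> Hg C U Y h" using module.submoduleE(2)[OF modM sub[OF h]] by blast
  then have "x \<oplus>\<^bsub>HomM C U Y\<^esub> \<ominus>\<^bsub>HomM C U Y\<^esub> x \<in> Hg C U Y h" using Hg_add Hg_neg h by blast
  moreover have "x \<in> carrier (HomM C U Y)" using Hg_carr h \<open>x \<in> _\<close> by blast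
  ultimately show ?thesis using module.axioms(2)[OF modM] abelian_group.r_neg by metis
qed

lemma zero_l: "f \<in> carrier (HomM C U Y) \<Longrightarrow> cmp C U Y Z \<zero>\<^bsub>HomM C Y Z\<^esub> f = \<zero>\<^bsub>HomM C U Z\<^esub>"
proof -
  assume f: "f \<in> carrier (HomM C U Y)"
  interpret M: abelian_group "HomM C U Z" using module.axioms(2)[OF modM] .
  interpret N: abelian_group "HomM C Y Z" using module.axioms(2)[OF modM] .
  let ?z = "cmp C U Y Z \<zero>\<^bsub>HomM C Y Z\<^esub> f"
  have zc: "?z \<in> carrier (HomM C U Z)" using f by simp
  have "?z = ?z \<oplus>\<^bsub>HomM C U Z\<^esub> ?z" using add_l[OF f, of "\<zero>\<^bsub>HomM C Y Z\<^esub>" Z "\<zero>\<^bsub>HomM C Y Z\<^esub>"] by simp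
  then show ?thesis using zc by (metis M.l_zero M.add.right_cancel M.zero_closed)
qed

lemma AG: "abelian_group (HomM C U Y)" using module.axioms(2)[OF modM] .

lemma cmp_finsum_l:
  assumes F: "finite F" and ph: "\<phi> \<in> F \<rightarrow> carrier (HomM C Y Z)" and f: "f \<in> carrier (HomM C U Y)"
  shows "cmp C U Y Z (finsum (HomM C Y Z) \<phi> F) f = finsum (HomM C U Z) (\<lambda>h. cmp C U Y Z (\<phi> h) f) F"
  using F ph
proof (induction F rule: finite_induct)
  case empty
  interpret M: abelian_group "HomM C U Z" by (rule AG)
  interpret N: abelian_group "HomM C Y Z" by (rule AG)
  show ?case using zero_l[OF f] by simp
next
  case (insert x F)
  interpret M: abelian_group "HomM C U Z" by (rule AG)
  interpret N: abelian_group "HomM C Y Z" by (rule AG)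
  have p: "\<phi> \<in> F \<rightarrow> carrier (HomM C Y Z)" "\<phi> x \<in> carrier (HomM C Y Z)" using insert.prems by auto
  have "cmp C U Y Z (finsum (HomM C Y Z) \<phi> (insert x F)) f =
     cmp C U Y Z (\<phi> x \<oplus>\<^bsub>HomM C Y Z\<^esub> finsum (HomM C Y Z) \<phi> F) f"
    using insert.hyps p by simp
  also have "\<dots> = cmp C U Y Z (\<phi> x) f \<oplus>\<^bsub>HomM C U Z\<^esub> cmp C U Y Z (finsum (HomM C Y Z) \<phi> F) f"
    using add_l[OF f] p by simp
  also have "\<dots> = cmp C U Y Z (\<phi> x) f \<oplus>\<^bsub>HomM C U Z\<^esub> finsum (HomM C U Z) (\<lambda>h. cmp C U Y Z (\<phi> h) f) F"
    using insert.IH p by simp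
  also have "\<dots> = finsum (HomM C U Z) (\<lambda>h. cmp C U Y Z (\<phi> h) f) (insert x F)"
    using insert.hyps p f by (subst M.finsum_insert) (auto intro!: cmp_carr)
  finally show ?case .
qed

lemma inv_deg:
  assumes a: "a \<in> carrier H" and f: "f \<in> Hg C U Y a" and g: "g \<in> carrier (HomM C Y U)"
    and gf: "cmp C U Y U g f = idm C U" and fg: "cmp C Y U Y f g = idm C Y"
  shows "g \<in> Hg C Y U (inv\<^bsub>H\<^esub> a)"
proof -
  interpret H: group H by (rule gH)
  interpret M: abelian_group "HomM C Y U" by (rule AG)
  interpret N: abelian_group "HomM C U U" by (rule AG)
  define ai where "ai = inv\<^bsub>H\<^esub> a"
  have ai: "ai \<in> carrier H" "ai \<otimes>\<^bsub>H\<^esub> a = \<one>\<^bsub>H\<^esub>" unfolding ai_def using a by auto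
  have fc: "f \<in> carrier (HomM C U Y)" using Hg_carr a f by blast
  obtain F \<phi> where F: "finite F" "F \<subseteq> carrier H" "\<forall>h\<in>F. \<phi> h \<in> Hg C Y U h"
     and gdef: "g = finsum (HomM C Y U) \<phi> F" using decomp[OF g] by blast
  have phc: "\<phi> \<in> F \<rightarrow> carrier (HomM C Y U)" using F Hg_carr by blast
  define g0 where "g0 = (if ai \<in> F then \<phi> ai else \<zero>\<^bsub>HomM C Y U\<^esub>)"
  define F1 where "F1 = F - {ai}"
  have g0: "g0 \<in> Hg C Y U ai" unfolding g0_def using F Hg_zero ai by auto
  have g0c: "g0 \<in> carrier (HomM C Y U)" using Hg_carr g0 ai by blast
  have F1: "finite F1" "F1 \<subseteq> carrier H" "ai \<notin> F1" "\<phi> \<in> F1 \<rightarrow> carrier (HomM C Y U)"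
    unfolding F1_def using F phc by auto
  define g1 where "g1 = finsum (HomM C Y U) \<phi> F1"
  have g1c: "g1 \<in> carrier (HomM C Y U)" unfolding g1_def using F1 by simp
  have gsplit: "g = g0 \<oplus>\<^bsub>HomM C Y U\<^esub> g1"
  proof (cases "ai \<in> F")
    case True
    then have e: "F = insert ai F1" unfolding F1_def by auto
    have "finsum (HomM C Y U) \<phi> (insert ai F1) = \<phi> ai \<oplus>\<^bsub>HomM C Y U\<^esub> finsum (HomM C Y U) \<phi> F1"
      using F1 phc True by (intro M.finsum_insert) auto
    then show ?thesis unfolding gdef g1_def g0_def using True e by simp
  next
    case False
    then have "F1 = F" unfolding F1_def by auto
    then show ?thesis using False g1c unfolding gdef g0_def g1_def by simp
  qed
  have idsplit: "idm C U = cmp C U Y U g0 f \<oplus>\<^bsub>HomM C U U\<^esub> cmp C U Y U g1 f"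
    using gf gsplit add_l[OF fc g0c g1c] by simp
  have g1f: "cmp C U Y U g1 f = finsum (HomM C U U) (\<lambda>h. cmp C U Y U (\<phi> h) f) F1"
    unfolding g1_def using cmp_finsum_l[OF F1(1) F1(4) fc] .
  define \<psi> where "\<psi> k = (if k = \<one>\<^bsub>H\<^esub> then cmp C U Y U g0 f \<ominus>\<^bsub>HomM C U U\<^esub> idm C U
      else cmp C U Y U (\<phi> (k \<otimes>\<^bsub>H\<^esub> ai)) f)" for k
  define F2 where "F2 = insert \<one>\<^bsub>H\<^esub> ((\<lambda>h. h \<otimes>\<^bsub>H\<^esub> a) ` F1)"
  have notin: "\<one>\<^bsub>H\<^esub> \<notin> (\<lambda>h. h \<otimes>\<^bsub>H\<^esub> a) ` F1"
  proof
    assume "\<one>\<^bsub>H\<^esub> \<in> (\<lambda>h. h \<otimes>\<^bsub>H\<^esub> a) ` F1"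
    then obtain h where h: "h \<in> F1" "h \<otimes>\<^bsub>H\<^esub> a = \<one>\<^bsub>H\<^esub>" by auto
    then have "h = ai" unfolding ai_def using a F1(2) H.inv_equality by blast
    then show False using h F1 by auto
  qed
  have bk: "h \<otimes>\<^bsub>H\<^esub> a \<otimes>\<^bsub>H\<^esub> ai = h" if "h \<in> carrier H" for h
    unfolding ai_def using that a by (simp add: H.m_assoc)
  have g0fc: "cmp C U Y U g0 f \<in> carrier (HomM C U U)" using g0c fc by simp
  have psi1: "\<psi> \<one>\<^bsub>H\<^esub> \<in> Hg C U U \<one>\<^bsub>H\<^esub>"
  proof -
    have "cmp C U Y U g0 f \<in> Hg C U U (ai \<otimes>\<^bsub>H\<^esub> a)" using cmp_deg[OF a ai(1) f g0] .
    then have "cmp C U Y U g0 f \<in> Hg C U U \<one>\<^bsub>H\<^esub>" using ai by simp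
    then show ?thesis unfolding \<psi>_def a_minus_def using Hg_add Hg_neg by simp
  qed
  have psiimg: "\<psi> (h \<otimes>\<^bsub>H\<^esub> a) = cmp C U Y U (\<phi> h) f" if "h \<in> F1" for h
  proof -
    have "h \<otimes>\<^bsub>H\<^esub> a \<noteq> \<one>\<^bsub>H\<^esub>" using notin that by (metis image_eqI)
    then show ?thesis using that bk F1(2) unfolding \<psi>_def by auto
  qed
  have F2c: "finite F2" "F2 \<subseteq> carrier H" unfolding F2_def using F1 a by auto
  have psideg: "\<forall>k\<in>F2. \<psi> k \<in> Hg C U U k"
  proof
    fix k assume "k \<in> F2"
    then consider "k = \<one>\<^bsub>H\<^esub>" | h where "h \<in> F1" "k = h \<otimes>\<^bsub>H\<^esub> a" unfolding F2_def by auto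
    then show "\<psi> k \<in> Hg C U U k"
    proof cases
      case 1 then show ?thesis using psi1 by simp
    next
      case 2
      have "\<phi> h \<in> Hg C Y U h" using F 2 unfolding F1_def by auto
      then show ?thesis using psiimg[OF 2(1)] 2 cmp_deg[OF a _ f] F1(2) by auto
    qed
  qed
  have psic: "\<psi> \<in> F2 \<rightarrow> carrier (HomM C U U)" using psideg F2c Hg_carr by blast
  have "finsum (HomM C U U) \<psi> F2 = \<psi> \<one>\<^bsub>H\<^esub> \<oplus>\<^bsub>HomM C U U\<^esub> finsum (HomM C U U) \<psi> ((\<lambda>h. h \<otimes>\<^bsub>H\<^esub> a) ` F1)"
    using F1 notin psic unfolding F2_def by (intro N.finsum_insert) auto
  also have "finsum (HomM C U U) \<psi> ((\<lambda>h. h \<otimes>\<^bsub>H\<^esub> a) ` F1) = finsum (HomM C U U) (\<lambda>h. \<psi> (h \<otimes>\<^bsub>H\<^esub> a)) F1"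
  proof (rule N.finsum_reindex)
    show "\<psi> \<in> (\<lambda>h. h \<otimes>\<^bsub>H\<^esub> a) ` F1 \<rightarrow> carrier (HomM C U U)" using psic unfolding F2_def by auto
    show "inj_on (\<lambda>h. h \<otimes>\<^bsub>H\<^esub> a) F1" using F1(2) a by (intro inj_onI) (metis H.r_cancel subsetD)
  qed
  also have "\<dots> = finsum (HomM C U U) (\<lambda>h. cmp C U Y U (\<phi> h) f) F1"
    using psiimg F1 fc by (intro N.finsum_cong') (auto intro!: cmp_carr)
  also have "\<dots> = cmp C U Y U g1 f" using g1f by simp
  finally have "finsum (HomM C U U) \<psi> F2 =
     (cmp C U Y U g0 f \<ominus>\<^bsub>HomM C U U\<^esub> idm C U) \<oplus>\<^bsub>HomM C U U\<^esub> cmp C U Y U g1 f"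
    unfolding \<psi>_def by simp
  also have "\<dots> = \<zero>\<^bsub>HomM C U U\<^esub>"
    using idsplit g0fc g1c fc N.ag1 by simp
  finally have "\<psi> \<one>\<^bsub>H\<^esub> = \<zero>\<^bsub>HomM C U U\<^esub>" using uniq[OF F2c _ _] psideg unfolding F2_def by blast
  then have g0f: "cmp C U Y U g0 f = idm C U" unfolding \<psi>_def using g0fc
    using N.ag2 by auto
  have "g0 = cmp C Y Y U g0 (idm C Y)" using g0c by simp
  also have "\<dots> = cmp C Y Y U g0 (cmp C Y U Y f g)" using fg by simp
  also have "\<dots> = cmp C Y U U (cmp C U Y U g0 f) g" using assoc[OF g fc g0c] .
  also have "\<dots> = g" using g0f g by simp
  finally show ?thesis using g0 ai_def by simp
qed

lemma iso_inv:
  assumes "iso_deg C a U Y f" "a \<in> carrier H"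
  obtains g where "g \<in> Hg C Y U (inv\<^bsub>H\<^esub> a)" "cmp C U Y U g f = idm C U" "cmp C Y U Y f g = idm C Y"
  using assms inv_deg unfolding iso_deg_def by blast

lemma iso_carr: "iso_deg C a U Y f \<Longrightarrow> a \<in> carrier H \<Longrightarrow> f \<in> carrier (HomM C U Y)"
  unfolding iso_deg_def using Hg_carr by blast

lemma iso_inv_iso:
  assumes "a \<in> carrier H" "f \<in> Hg C U Y a" "g \<in> Hg C Y U (inv\<^bsub>H\<^esub> a)"
    "cmp C U Y U g f = idm C U" "cmp C Y U Y f g = idm C Y"
  shows "iso_deg C (inv\<^bsub>H\<^esub> a) Y U g"
proof -
  interpret H: group H by (rule gH)
  show ?thesis unfolding iso_deg_def using assms Hg_carr[OF _ assms(2)] by blast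
qed

lemma iso_comp:
  assumes f: "iso_deg C a U Y f" and g: "iso_deg C b Y Z g" and a: "a \<in> carrier H" and b: "b \<in> carrier H"
  shows "iso_deg C (b \<otimes>\<^bsub>H\<^esub> a) U Z (cmp C U Y Z g f)"
proof -
  obtain f' where f': "f' \<in> carrier (HomM C Y U)" "cmp C U Y U f' f = idm C U" "cmp C Y U Y f f' = idm C Y"
    using f unfolding iso_deg_def by blast
  obtain g' where g': "g' \<in> carrier (HomM C Z Y)" "cmp C Y Z Y g' g = idm C Y" "cmp C Z Y Z g g' = idm C Z"
    using g unfolding iso_deg_def by blast
  have fc: "f \<in> carrier (HomM C U Y)" and gc: "g \<in> carrier (HomM C Y Z)" using iso_carr f g a b by auto
  have deg: "cmp C U Y Z g f \<in> Hg C U Z (b \<otimes>\<^bsub>H\<^esub> a)" using cmp_deg[OF a b] f g unfolding iso_deg_def by blast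
  have 1: "cmp C U Z U (cmp C Z Y U f' g') (cmp C U Y Z g f) = idm C U"
  proof -
    have "cmp C U Z U (cmp C Z Y U f' g') (cmp C U Y Z g f) = cmp C U Y U (cmp C Y Z U (cmp C Z Y U f' g') g) f"
      using assoc[OF fc gc, of "cmp C Z Y U f' g'"] f' g' by simp
    also have "cmp C Y Z U (cmp C Z Y U f' g') g = cmp C Y Y U f' (cmp C Y Z Y g' g)"
      using assoc[OF gc g'(1) f'(1)] by simp
    finally show ?thesis using f' g' by simp
  qed
  have 2: "cmp C Z U Z (cmp C U Y Z g f) (cmp C Z Y U f' g') = idm C Z"
  proof -
    have "cmp C Z U Z (cmp C U Y Z g f) (cmp C Z Y U f' g') = cmp C Z Y Z (cmp C Y U Z (cmp C U Y Z g f) f') g'"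
      using assoc[OF g'(1) f'(1), of "cmp C U Y Z g f"] fc gc by simp
    also have "cmp C Y U Z (cmp C U Y Z g f) f' = cmp C Y Y Z g (cmp C Y U Y f f')"
      using assoc[OF f'(1) fc gc] by simp
    finally show ?thesis using f' g' gc by simp
  qed
  show ?thesis unfolding iso_deg_def using deg 1 2 f' g' by (intro conjI bexI[of _ "cmp C Z Y U f' g'"]) auto
qed

lemma iso_id: "iso_deg C \<one>\<^bsub>H\<^esub> U U (idm C U)"
  unfolding iso_deg_def by (intro conjI id_deg bexI[of _ "idm C U"]) auto

lemma iso_sm:
  assumes g: "iso_deg C a U Y g" and a: "a \<in> carrier H" and c: "c \<in> Units R"
  shows "iso_deg C a U Y (c \<odot>\<^bsub>HomM C U Y\<^esub> g)"
proof -
  interpret R: cring R by (rule cR)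
  obtain g' where g': "g' \<in> carrier (HomM C Y U)" "cmp C U Y U g' g = idm C U" "cmp C Y U Y g g' = idm C Y"
    using g unfolding iso_deg_def by blast
  have gc: "g \<in> carrier (HomM C U Y)" using iso_carr g a by auto
  have cc: "c \<in> carrier R" "inv\<^bsub>R\<^esub> c \<in> carrier R" "inv\<^bsub>R\<^esub> c \<otimes>\<^bsub>R\<^esub> c = \<one>\<^bsub>R\<^esub>" "c \<otimes>\<^bsub>R\<^esub> inv\<^bsub>R\<^esub> c = \<one>\<^bsub>R\<^esub>"
    using c by auto
  have "cmp C U Y U (inv\<^bsub>R\<^esub> c \<odot>\<^bsub>HomM C Y U\<^esub> g') (c \<odot>\<^bsub>HomM C U Y\<^esub> g) = idm C U"
    using g' gc cc sm_l sm_r module.smult_assoc1[OF modM, symmetric] module.smult_one[OF modM]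
      module.smult_closed[OF modM] by simp
  moreover have "cmp C Y U Y (c \<odot>\<^bsub>HomM C U Y\<^esub> g) (inv\<^bsub>R\<^esub> c \<odot>\<^bsub>HomM C Y U\<^esub> g') = idm C Y"
    using g' gc cc sm_l sm_r module.smult_assoc1[OF modM, symmetric] module.smult_one[OF modM]
      module.smult_closed[OF modM] by simp
  moreover have "c \<odot>\<^bsub>HomM C U Y\<^esub> g \<in> Hg C U Y a" using Hg_sm a g cc unfolding iso_deg_def by blast
  ultimately show ?thesis unfolding iso_deg_def using g' cc module.smult_closed[OF modM]
    by (intro conjI bexI[of _ "inv\<^bsub>R\<^esub> c \<odot>\<^bsub>HomM C Y U\<^esub> g'"]) auto
qed

abbreviation "endo_free Ob \<equiv> endo_free0 R H C Ob"

lemma endo_inj: "endo_free Ob \<Longrightarrow> r \<in> carrier R \<Longrightarrow> s \<in> carrier R \<Longrightarrow>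
   r \<odot>\<^bsub>HomM C Ob Ob\<^esub> idm C Ob = s \<odot>\<^bsub>HomM C Ob Ob\<^esub> idm C Ob \<Longrightarrow> r = s"
  unfolding endo_free0_def bij_betw_def inj_on_def by blast

lemma endo_surj: "endo_free Ob \<Longrightarrow> k \<in> Hg C Ob Ob \<one>\<^bsub>H\<^esub> \<Longrightarrow> \<exists>r\<in>carrier R. k = r \<odot>\<^bsub>HomM C Ob Ob\<^esub> idm C Ob"
  unfolding endo_free0_def bij_betw_def by blast

lemma gen_of_iso:
  assumes P: "endo_free Ob" and a: "a \<in> carrier H" and g: "iso_deg C a Ob Y g"
  shows "free_generator R (HomM C Ob Y) (Hg C Ob Y a) g"
proof -
  interpret H: group H by (rule gH)
  obtain g' where g': "g' \<in> Hg C Y Ob (inv\<^bsub>H\<^esub> a)" "cmp C Ob Y Ob g' g = idm C Ob" "cmp C Y Ob Y g g' = idm C Y"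
    using iso_inv[OF g a] by blast
  have ai: "inv\<^bsub>H\<^esub> a \<in> carrier H" using a by simp
  have g'c: "g' \<in> carrier (HomM C Y Ob)" using Hg_carr[OF ai g'(1)] .
  have gc: "g \<in> carrier (HomM C Ob Y)" using iso_carr g a by auto
  have gH: "g \<in> Hg C Ob Y a" using g unfolding iso_deg_def by blast
  show ?thesis unfolding free_generator_def bij_betw_def
  proof (intro conjI gH inj_onI)
    fix r s assume r: "r \<in> carrier R" and s: "s \<in> carrier R" and e: "r \<odot>\<^bsub>HomM C Ob Y\<^esub> g = s \<odot>\<^bsub>HomM C Ob Y\<^esub> g"
    have "r \<odot>\<^bsub>HomM C Ob Ob\<^esub> idm C Ob = cmp C Ob Y Ob g' (r \<odot>\<^bsub>HomM C Ob Y\<^esub> g)" using sm_r[OF gc g'c r] g' by simp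
    also have "\<dots> = s \<odot>\<^bsub>HomM C Ob Ob\<^esub> idm C Ob" using sm_r[OF gc g'c s] g' e by simp
    finally show "r = s" using endo_inj[OF P r s] by simp
  next
    show "(\<lambda>r. r \<odot>\<^bsub>HomM C Ob Y\<^esub> g) ` carrier R = Hg C Ob Y a"
    proof
      show "(\<lambda>r. r \<odot>\<^bsub>HomM C Ob Y\<^esub> g) ` carrier R \<subseteq> Hg C Ob Y a" using Hg_sm[OF a gH] by blast
      show "Hg C Ob Y a \<subseteq> (\<lambda>r. r \<odot>\<^bsub>HomM C Ob Y\<^esub> g) ` carrier R"
      proof
        fix k assume k: "k \<in> Hg C Ob Y a"
        have kc: "k \<in> carrier (HomM C Ob Y)" using Hg_carr[OF a k] .
        have "cmp C Ob Y Ob g' k \<in> Hg C Ob Ob (inv\<^bsub>H\<^esub> a \<otimes>\<^bsub>H\<^esub> a)" using cmp_deg[OF a ai k g'(1)] .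
        then have "cmp C Ob Y Ob g' k \<in> Hg C Ob Ob \<one>\<^bsub>H\<^esub>" using a by simp
        then obtain r where r: "r \<in> carrier R" "cmp C Ob Y Ob g' k = r \<odot>\<^bsub>HomM C Ob Ob\<^esub> idm C Ob"
          using endo_surj[OF P] by blast
        have "k = cmp C Ob Y Y (cmp C Y Ob Y g g') k" using g' kc by simp
        also have "\<dots> = cmp C Ob Ob Y g (cmp C Ob Y Ob g' k)" using assoc[OF kc g'c gc] by simp
        also have "\<dots> = r \<odot>\<^bsub>HomM C Ob Y\<^esub> g" using r sm_r[OF id_carr gc r(1)] gc by simp
        finally show "k \<in> (\<lambda>r. r \<odot>\<^bsub>HomM C Ob Y\<^esub> g) ` carrier R" using r by blast
      qed
    qed
  qed
qed

lemma endo_transfer: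
  assumes P: "endo_free Ob" and a: "a \<in> carrier H" and g: "iso_deg C a Ob Y g"
  shows "endo_free Y"
proof -
  interpret H: group H by (rule gH)
  obtain g' where g': "g' \<in> Hg C Y Ob (inv\<^bsub>H\<^esub> a)" "cmp C Ob Y Ob g' g = idm C Ob" "cmp C Y Ob Y g g' = idm C Y"
    using iso_inv[OF g a] by blast
  have ai: "inv\<^bsub>H\<^esub> a \<in> carrier H" using a by simp
  have g'c: "g' \<in> carrier (HomM C Y Ob)" using Hg_carr[OF ai g'(1)] .
  have gc: "g \<in> carrier (HomM C Ob Y)" using iso_carr g a by auto
  have gH: "g \<in> Hg C Ob Y a" using g unfolding iso_deg_def by blast
  have conj: "cmp C Ob Y Ob g' (cmp C Ob Y Y (r \<odot>\<^bsub>HomM C Y Y\<^esub> idm C Y) g) = r \<odot>\<^bsub>HomM C Ob Ob\<^esub> idm C Ob"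
    if r: "r \<in> carrier R" for r
    using sm_l[OF gc id_carr r] sm_r[OF gc g'c r] gc g' by simp
  show ?thesis unfolding endo_free0_def bij_betw_def
  proof (intro conjI inj_onI)
    fix r s assume r: "r \<in> carrier R" and s: "s \<in> carrier R"
      and e: "r \<odot>\<^bsub>HomM C Y Y\<^esub> idm C Y = s \<odot>\<^bsub>HomM C Y Y\<^esub> idm C Y"
    have "r \<odot>\<^bsub>HomM C Ob Ob\<^esub> idm C Ob = s \<odot>\<^bsub>HomM C Ob Ob\<^esub> idm C Ob" using conj[OF r] conj[OF s] e by simp
    then show "r = s" using endo_inj[OF P r s] by simp
  next
    show "(\<lambda>r. r \<odot>\<^bsub>HomM C Y Y\<^esub> idm C Y) ` carrier R = Hg C Y Y \<one>\<^bsub>H\<^esub>"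
    proof
      show "(\<lambda>r. r \<odot>\<^bsub>HomM C Y Y\<^esub> idm C Y) ` carrier R \<subseteq> Hg C Y Y \<one>\<^bsub>H\<^esub>" using Hg_sm[OF H.one_closed id_deg] by blast
      show "Hg C Y Y \<one>\<^bsub>H\<^esub> \<subseteq> (\<lambda>r. r \<odot>\<^bsub>HomM C Y Y\<^esub> idm C Y) ` carrier R"
      proof
        fix k assume k: "k \<in> Hg C Y Y \<one>\<^bsub>H\<^esub>"
        have kc: "k \<in> carrier (HomM C Y Y)" using Hg_carr[OF H.one_closed k] .
        have "cmp C Ob Y Y k g \<in> Hg C Ob Y (\<one>\<^bsub>H\<^esub> \<otimes>\<^bsub>H\<^esub> a)" using cmp_deg[OF a H.one_closed gH k] .
        then have kg: "cmp C Ob Y Y k g \<in> Hg C Ob Y a" using a by simp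
        have "cmp C Ob Y Ob g' (cmp C Ob Y Y k g) \<in> Hg C Ob Ob (inv\<^bsub>H\<^esub> a \<otimes>\<^bsub>H\<^esub> a)" using cmp_deg[OF a ai kg g'(1)] .
        then have "cmp C Ob Y Ob g' (cmp C Ob Y Y k g) \<in> Hg C Ob Ob \<one>\<^bsub>H\<^esub>" using a by simp
        then obtain r where r: "r \<in> carrier R" "cmp C Ob Y Ob g' (cmp C Ob Y Y k g) = r \<odot>\<^bsub>HomM C Ob Ob\<^esub> idm C Ob"
          using endo_surj[OF P] by blast
        have kgc: "cmp C Ob Y Y k g \<in> carrier (HomM C Ob Y)" using kc gc by simp
        have "k = cmp C Y Y Y k (cmp C Y Ob Y g g')" using g' kc by simp
        also have "\<dots> = cmp C Y Ob Y (cmp C Ob Y Y k g) g'" using assoc[OF g'c gc kc] by simp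
        also have "cmp C Ob Y Y k g = cmp C Ob Y Y (cmp C Y Ob Y g g') (cmp C Ob Y Y k g)" using kgc g' by simp
        also have "\<dots> = cmp C Ob Ob Y g (cmp C Ob Y Ob g' (cmp C Ob Y Y k g))" using assoc[OF kgc g'c gc] by simp
        also have "\<dots> = r \<odot>\<^bsub>HomM C Ob Y\<^esub> g" using r sm_r[OF id_carr gc r(1)] gc by simp
        also have "cmp C Y Ob Y (r \<odot>\<^bsub>HomM C Ob Y\<^esub> g) g' = r \<odot>\<^bsub>HomM C Y Y\<^esub> idm C Y"
          using sm_l[OF g'c gc r(1)] g' by simp
        finally show "k \<in> (\<lambda>r. r \<odot>\<^bsub>HomM C Y Y\<^esub> idm C Y) ` carrier R" using r by blast
      qed
    qed
  qed
qed

lemma gen_is_iso: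
  assumes P: "endo_free Ob" and a: "a \<in> carrier H" and g: "iso_deg C a Ob Y g"
    and k: "free_generator R (HomM C Ob Y) (Hg C Ob Y a) k"
  shows "iso_deg C a Ob Y k"
proof -
  have gg: "free_generator R (HomM C Ob Y) (Hg C Ob Y a) g" using gen_of_iso[OF P a g] .
  obtain c where c: "c \<in> carrier R" "k = c \<odot>\<^bsub>HomM C Ob Y\<^esub> g" using fg_surj[OF gg fg_in[OF k]] by blast
  have "c \<in> Units R" using gen_unit[OF modM _ gg k c] Hg_carr[OF a] by blast
  then show ?thesis using iso_sm[OF g a] c by simp
qed

end

locale ctx2 = ctx R H G \<tau> C
  for R :: "('r, 'a) ring_scheme" and H :: "('h, 'b) monoid_scheme"
    and G :: "('g, 'c) monoid_scheme" and \<tau> :: "'h \<Rightarrow> 'g"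
    and C :: "('o, 'm, 'r, 'h, 'g, 'z) gcat_scheme" +
  fixes sh :: "'o \<Rightarrow> 'h \<Rightarrow> 'o" and rs :: "'o \<Rightarrow> 'h \<Rightarrow> 'm" and S :: 'o
  assumes one_neq: "\<one>\<^bsub>R\<^esub> \<noteq> \<zero>\<^bsub>R\<^esub>" and gG: "group G" and hom: "\<tau> \<in> hom H G"
    and shifts: "has_shifts H C sh rs" and SH: "S \<in> Hmg C" and simpS: "simple_obj R H C S"
begin

lemma endoS: "endo_free S"
proof -
  interpret R: cring R by (rule cR)
  obtain \<phi> where \<phi>: "bij_betw \<phi> (carrier R) (Hg C S S \<one>\<^bsub>H\<^esub>)" "\<phi> \<one>\<^bsub>R\<^esub> = idm C S"
    "\<forall>r\<in>carrier R. \<forall>s\<in>carrier R. \<phi> (r \<otimes>\<^bsub>R\<^esub> s) = r \<odot>\<^bsub>HomM C S S\<^esub> \<phi> s"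
    using simpS unfolding simple_obj_def by blast
  have e: "r \<odot>\<^bsub>HomM C S S\<^esub> idm C S = \<phi> r" if "r \<in> carrier R" for r
  proof -
    have "\<phi> (r \<otimes>\<^bsub>R\<^esub> \<one>\<^bsub>R\<^esub>) = r \<odot>\<^bsub>HomM C S S\<^esub> \<phi> \<one>\<^bsub>R\<^esub>" using \<phi>(3) that R.one_closed by blast
    then show ?thesis using that \<phi>(2) by simp
  qed
  have "bij_betw (\<lambda>r. r \<odot>\<^bsub>HomM C S S\<^esub> idm C S) (carrier R) (Hg C S S \<one>\<^bsub>H\<^esub>) = bij_betw \<phi> (carrier R) (Hg C S S \<one>\<^bsub>H\<^esub>)"
    by (rule bij_betw_cong) (rule e)
  then show ?thesis unfolding endo_free0_def using \<phi>(1) by simp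
qed

lemma shift_iso: "a \<in> carrier H \<Longrightarrow> iso_deg C a U (sh U a) (rs U a)"
  using shifts unfolding has_shifts_def by blast

lemma stab_char: "stab H C sh S = {a \<in> carrier H. \<exists>u. iso_deg C a S S u}"
proof -
  interpret H: group H by (rule gH)
  have "(\<exists>f. iso_deg C \<one>\<^bsub>H\<^esub> (sh S a) S f) \<longleftrightarrow> (\<exists>u. iso_deg C a S S u)" if a: "a \<in> carrier H" for a
  proof
    assume "\<exists>f. iso_deg C \<one>\<^bsub>H\<^esub> (sh S a) S f"
    then obtain f where f: "iso_deg C \<one>\<^bsub>H\<^esub> (sh S a) S f" by blast
    have "iso_deg C (\<one>\<^bsub>H\<^esub> \<otimes>\<^bsub>H\<^esub> a) S S (cmp C S (sh S a) S f (rs S a))"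
      using iso_comp[OF shift_iso[OF a] f a H.one_closed] .
    then show "\<exists>u. iso_deg C a S S u" using a by auto
  next
    assume "\<exists>u. iso_deg C a S S u"
    then obtain u where u: "iso_deg C a S S u" by blast
    obtain r' where r': "r' \<in> Hg C (sh S a) S (inv\<^bsub>H\<^esub> a)" "cmp C S (sh S a) S r' (rs S a) = idm C S"
       "cmp C (sh S a) S (sh S a) (rs S a) r' = idm C (sh S a)"
      using iso_inv[OF shift_iso[OF a] a] by blast
    have "iso_deg C (inv\<^bsub>H\<^esub> a) (sh S a) S r'"
      using iso_inv_iso[OF a _ r'] shift_iso[OF a] unfolding iso_deg_def by blast
    from iso_comp[OF this u] have "iso_deg C (a \<otimes>\<^bsub>H\<^esub> inv\<^bsub>H\<^esub> a) (sh S a) S (cmp C (sh S a) S S u r')"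
      using a by simp
    then show "\<exists>f. iso_deg C \<one>\<^bsub>H\<^esub> (sh S a) S f" using a by auto
  qed
  then show ?thesis unfolding stab_def by blast
qed

lemma stab_sub: "subgroup (stab H C sh S) H"
proof -
  interpret H: group H by (rule gH)
  show ?thesis unfolding stab_char
  proof (rule H.subgroupI)
    show "{a \<in> carrier H. \<exists>u. iso_deg C a S S u} \<noteq> {}" using iso_id by blast
  next
    fix a assume "a \<in> {a \<in> carrier H. \<exists>u. iso_deg C a S S u}"
    then obtain u where a: "a \<in> carrier H" and u: "iso_deg C a S S u" by blast
    obtain u' where u': "u' \<in> Hg C S S (inv\<^bsub>H\<^esub> a)" "cmp C S S S u' u = idm C S" "cmp C S S S u u' = idm C S"
      using iso_inv[OF u a] by blast
    have "iso_deg C (inv\<^bsub>H\<^esub> a) S S u'" using iso_inv_iso[OF a _ u'] u unfolding iso_deg_def by blast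
    then show "inv\<^bsub>H\<^esub> a \<in> {a \<in> carrier H. \<exists>u. iso_deg C a S S u}" using a by auto
  next
    fix a b assume "a \<in> {a \<in> carrier H. \<exists>u. iso_deg C a S S u}" "b \<in> {a \<in> carrier H. \<exists>u. iso_deg C a S S u}"
    then obtain u v where a: "a \<in> carrier H" and u: "iso_deg C a S S u" and b: "b \<in> carrier H" and v: "iso_deg C b S S v" by blast
    show "a \<otimes>\<^bsub>H\<^esub> b \<in> {a \<in> carrier H. \<exists>u. iso_deg C a S S u}" using iso_comp[OF v u b a] a b by auto
  qed auto
qed

lemma id_nonzero: "idm C S \<noteq> \<zero>\<^bsub>HomM C S S\<^esub>"
proof
  assume e: "idm C S = \<zero>\<^bsub>HomM C S S\<^esub>"
  interpret M: module R "HomM C S S" by (rule modM)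
  have "\<one>\<^bsub>R\<^esub> \<odot>\<^bsub>HomM C S S\<^esub> idm C S = \<zero>\<^bsub>R\<^esub> \<odot>\<^bsub>HomM C S S\<^esub> idm C S" using e by simp
  then have "\<one>\<^bsub>R\<^esub> = \<zero>\<^bsub>R\<^esub>" using endo_inj[OF endoS] by simp
  then show False using one_neq by simp
qed

lemma stab_ker: "stab H C sh S \<subseteq> kernel H G \<tau>"
proof
  interpret H: group H by (rule gH)
  interpret G: group G by (rule gG)
  fix a assume "a \<in> stab H C sh S"
  then obtain u where a: "a \<in> carrier H" and u: "iso_deg C a S S u" unfolding stab_char by blast
  obtain u' where u': "u' \<in> carrier (HomM C S S)" "cmp C S S S u u' = idm C S"
    using u unfolding iso_deg_def by blast
  have uH: "u \<in> Hg C S S a" using u unfolding iso_deg_def by blast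
  have "u \<noteq> \<zero>\<^bsub>HomM C S S\<^esub>" using u'(2) zero_l[OF u'(1)] id_nonzero by auto
  then have "odeg C S = \<tau> a \<otimes>\<^bsub>G\<^esub> odeg C S"
    using mism[OF SH SH a] uH by blast
  moreover have "odeg C S \<in> carrier G" using odeg_c[OF SH] .
  moreover have "\<tau> a \<in> carrier G" using hom a unfolding hom_def by blast
  ultimately have "\<tau> a = \<one>\<^bsub>G\<^esub>" by (metis G.l_one G.one_closed G.r_cancel)
  then show "a \<in> kernel H G \<tau>" unfolding kernel_def using a by simp
qed

lemma endo_shift: "a \<in> carrier H \<Longrightarrow> endo_free (sh S a)"
  using endo_transfer[OF endoS _ shift_iso] by blast

lemma iso_between:
  assumes x: "x \<in> carrier H" and y: "y \<in> carrier H" and a: "a \<in> carrier H"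
    and l: "inv\<^bsub>H\<^esub> y \<otimes>\<^bsub>H\<^esub> (a \<otimes>\<^bsub>H\<^esub> x) \<in> stab H C sh S"
  shows "\<exists>g. iso_deg C a (sh S x) (sh S y) g"
proof -
  interpret H: group H by (rule gH)
  let ?l = "inv\<^bsub>H\<^esub> y \<otimes>\<^bsub>H\<^esub> (a \<otimes>\<^bsub>H\<^esub> x)"
  obtain u where lc: "?l \<in> carrier H" and u: "iso_deg C ?l S S u" using l unfolding stab_char by blast
  obtain r' where r': "r' \<in> Hg C (sh S x) S (inv\<^bsub>H\<^esub> x)" "cmp C S (sh S x) S r' (rs S x) = idm C S"
       "cmp C (sh S x) S (sh S x) (rs S x) r' = idm C (sh S x)"
    using iso_inv[OF shift_iso[OF x] x] by blast
  have r'i: "iso_deg C (inv\<^bsub>H\<^esub> x) (sh S x) S r'"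
    using iso_inv_iso[OF x _ r'] shift_iso[OF x] unfolding iso_deg_def by blast
  have 1: "iso_deg C (?l \<otimes>\<^bsub>H\<^esub> inv\<^bsub>H\<^esub> x) (sh S x) S (cmp C (sh S x) S S u r')"
    using iso_comp[OF r'i u] x lc by simp
  have 2: "iso_deg C (y \<otimes>\<^bsub>H\<^esub> (?l \<otimes>\<^bsub>H\<^esub> inv\<^bsub>H\<^esub> x)) (sh S x) (sh S y)
      (cmp C (sh S x) S (sh S y) (rs S y) (cmp C (sh S x) S S u r'))"
    using iso_comp[OF 1 shift_iso[OF y]] x y lc by simp
  have "y \<otimes>\<^bsub>H\<^esub> (?l \<otimes>\<^bsub>H\<^esub> inv\<^bsub>H\<^esub> x) = a"
    using x y a by (simp add: H.m_assoc[symmetric]) (simp add: H.m_assoc)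
  then show ?thesis using 2 by auto
qed

end


locale ctx3 = ctx2 R H G \<tau> C sh rs S
  for R :: "('r, 'a) ring_scheme" and H :: "('h, 'b) monoid_scheme"
    and G :: "('g, 'c) monoid_scheme" and \<tau> :: "'h \<Rightarrow> 'g"
    and C :: "('o, 'm, 'r, 'h, 'g, 'z) gcat_scheme"
    and sh :: "'o \<Rightarrow> 'h \<Rightarrow> 'o" and rs :: "'o \<Rightarrow> 'h \<Rightarrow> 'm" and S :: 'o +
  fixes I :: "'i set" and hr :: "'i \<Rightarrow> 'h"
  assumes cr: "coset_reps H (stab H C sh S) I hr"
begin

abbreviation "LL \<equiv> stab H C sh S"
abbreviation "act \<equiv> coset_act H LL I hr"

lemma L_sub: "subgroup LL H" by (rule stab_sub)
lemma Lc: "LL \<subseteq> carrier H" using L_sub subgroup.subset by blast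
lemma hr_c: "i \<in> I \<Longrightarrow> hr i \<in> carrier H" using cr unfolding coset_reps_def by blast
lemma cr_uniq: "x \<in> carrier H \<Longrightarrow> \<exists>!i. i \<in> I \<and> x \<in> l_coset H (hr i) LL"
  using cr unfolding coset_reps_def by blast

lemma self_in: "x \<in> carrier H \<Longrightarrow> x \<in> l_coset H x LL"
proof -
  interpret H: group H by (rule gH)
  assume x: "x \<in> carrier H"
  have "x \<otimes>\<^bsub>H\<^esub> \<one>\<^bsub>H\<^esub> \<in> l_coset H x LL" unfolding l_coset_def using subgroup.one_closed[OF L_sub] by blast
  then show ?thesis using x by simp
qed

lemma coset_eq_iff: "x \<in> carrier H \<Longrightarrow> y \<in> carrier H \<Longrightarrow> (l_coset H x LL = l_coset H y LL) \<longleftrightarrow> x \<in> l_coset H y LL"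
proof -
  interpret H: group H by (rule gH)
  assume x: "x \<in> carrier H" and y: "y \<in> carrier H"
  show ?thesis
  proof
    assume "l_coset H x LL = l_coset H y LL" then show "x \<in> l_coset H y LL" using self_in[OF x] by simp
  next
    assume "x \<in> l_coset H y LL" then show "l_coset H x LL = l_coset H y LL"
      using H.l_repr_independence[OF _ y L_sub] by simp
  qed
qed

lemma rep_unique: "i \<in> I \<Longrightarrow> j \<in> I \<Longrightarrow> l_coset H (hr i) LL = l_coset H (hr j) LL \<Longrightarrow> i = j"
  using cr_uniq[OF hr_c] self_in[OF hr_c] by metis

lemma act_spec: assumes i: "i \<in> I" and a: "a \<in> carrier H"
  shows "act a i \<in> I \<and> l_coset H (hr (act a i)) LL = l_coset H (a \<otimes>\<^bsub>H\<^esub> hr i) LL"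
proof -
  interpret H: group H by (rule gH)
  have x: "a \<otimes>\<^bsub>H\<^esub> hr i \<in> carrier H" using a hr_c[OF i] by simp
  obtain j where j: "j \<in> I" "a \<otimes>\<^bsub>H\<^esub> hr i \<in> l_coset H (hr j) LL" using cr_uniq[OF x] by blast
  have je: "l_coset H (hr j) LL = l_coset H (a \<otimes>\<^bsub>H\<^esub> hr i) LL" using coset_eq_iff[OF x hr_c[OF j(1)]] j by simp
  have "act a i = j" unfolding coset_act_def
  proof (rule the_equality)
    show "j \<in> I \<and> l_coset H (hr j) LL = l_coset H (a \<otimes>\<^bsub>H\<^esub> hr i) LL" using j je by simp
  next
    fix j' assume j': "j' \<in> I \<and> l_coset H (hr j') LL = l_coset H (a \<otimes>\<^bsub>H\<^esub> hr i) LL"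
    then show "j' = j" using rep_unique j je by metis
  qed
  then show ?thesis using j je by simp
qed

lemma act_I: "i \<in> I \<Longrightarrow> a \<in> carrier H \<Longrightarrow> act a i \<in> I" using act_spec by blast

lemma act_eq: assumes i: "i \<in> I" and a: "a \<in> carrier H" and j: "j \<in> I"
  and e: "l_coset H (hr j) LL = l_coset H (a \<otimes>\<^bsub>H\<^esub> hr i) LL"
  shows "act a i = j"
  using act_spec[OF i a] e rep_unique j by metis

lemma act_mult: assumes a: "a \<in> carrier H" and b: "b \<in> carrier H" and i: "i \<in> I"
  shows "act (a \<otimes>\<^bsub>H\<^esub> b) i = act a (act b i)"
proof -
  interpret H: group H by (rule gH)
  have bi: "act b i \<in> I" using act_I[OF i b] .
  have "l_coset H (hr (act a (act b i))) LL = l_coset H (a \<otimes>\<^bsub>H\<^esub> hr (act b i)) LL" using act_spec[OF bi a] by blast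
  also have "\<dots> = l_coset H a (l_coset H (hr (act b i)) LL)" using H.lcos_m_assoc[OF Lc a hr_c[OF bi]] by simp
  also have "\<dots> = l_coset H a (l_coset H (b \<otimes>\<^bsub>H\<^esub> hr i) LL)" using act_spec[OF i b] by simp
  also have "\<dots> = l_coset H (a \<otimes>\<^bsub>H\<^esub> b \<otimes>\<^bsub>H\<^esub> hr i) LL" using H.lcos_m_assoc[OF Lc a, of "b \<otimes>\<^bsub>H\<^esub> hr i"] a b hr_c[OF i]
    by (simp add: H.m_assoc)
  finally show ?thesis using act_eq[OF i _ act_I[OF bi a]] a b by simp
qed

lemma act_one: "i \<in> I \<Longrightarrow> act \<one>\<^bsub>H\<^esub> i = i"
proof -
  interpret H: group H by (rule gH)
  assume i: "i \<in> I" then show ?thesis using act_eq[OF i H.one_closed i] hr_c[OF i] by simp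
qed

lemma cos_L: "D \<in> left_cosets_of H LL \<Longrightarrow> \<exists>i\<in>I. D = l_coset H (hr i) LL"
proof -
  assume "D \<in> left_cosets_of H LL"
  then obtain x where x: "x \<in> carrier H" "D = l_coset H x LL" unfolding left_cosets_of_def by blast
  obtain i where "i \<in> I" "x \<in> l_coset H (hr i) LL" using cr_uniq[OF x(1)] by blast
  then show ?thesis using coset_eq_iff[OF x(1) hr_c] x by blast
qed

lemma cos_in: "i \<in> I \<Longrightarrow> l_coset H (hr i) LL \<in> left_cosets_of H LL"
  unfolding left_cosets_of_def using hr_c by blast

lemma cos_act: "i \<in> I \<Longrightarrow> c \<in> carrier H \<Longrightarrow> l_coset H c (l_coset H (hr i) LL) = l_coset H (hr (act c i)) LL"
proof -
  interpret H: group H by (rule gH)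
  assume i: "i \<in> I" and c: "c \<in> carrier H"
  show ?thesis using H.lcos_m_assoc[OF Lc c hr_c[OF i]] act_spec[OF i c] by simp
qed

lemma act_stab: assumes i: "i \<in> I" and a: "a \<in> carrier H"
  shows "inv\<^bsub>H\<^esub> (hr (act a i)) \<otimes>\<^bsub>H\<^esub> (a \<otimes>\<^bsub>H\<^esub> hr i) \<in> LL"
proof -
  interpret H: group H by (rule gH)
  have x: "a \<otimes>\<^bsub>H\<^esub> hr i \<in> carrier H" using a hr_c[OF i] by simp
  have y: "hr (act a i) \<in> carrier H" using hr_c act_I[OF i a] by blast
  have "a \<otimes>\<^bsub>H\<^esub> hr i \<in> l_coset H (hr (act a i)) LL" using coset_eq_iff[OF x y] act_spec[OF i a] by simp
  then obtain l where l: "l \<in> LL" "a \<otimes>\<^bsub>H\<^esub> hr i = hr (act a i) \<otimes>\<^bsub>H\<^esub> l" unfolding l_coset_def by blast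
  have "l \<in> carrier H" using l Lc by blast
  then show ?thesis using l y by (simp add: H.m_assoc[symmetric])
qed

end


locale ctx4 = ctx3 R H G \<tau> C sh rs S I hr
  for R :: "('r, 'a) ring_scheme" and H :: "('h, 'b) monoid_scheme"
    and G :: "('g, 'c) monoid_scheme" and \<tau> :: "'h \<Rightarrow> 'g"
    and C :: "('o, 'm, 'r, 'h, 'g, 'z) gcat_scheme"
    and sh :: "'o \<Rightarrow> 'h \<Rightarrow> 'o" and rs :: "'o \<Rightarrow> 'h \<Rightarrow> 'm" and S :: 'o
    and I :: "'i set" and hr :: "'i \<Rightarrow> 'h" +
  fixes f :: "'h \<Rightarrow> 'i \<Rightarrow> 'm"
  assumes fgen: "\<And>i a. i \<in> I \<Longrightarrow> a \<in> carrier H \<Longrightarrow>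
     free_generator R (HomM C (sh S (hr i)) (sh S (hr (coset_act H (stab H C sh S) I hr a i))))
       (Hg C (sh S (hr i)) (sh S (hr (coset_act H (stab H C sh S) I hr a i))) a) (f a i)"
    and f1: "\<And>i. i \<in> I \<Longrightarrow> f \<one>\<^bsub>H\<^esub> i = idm C (sh S (hr i))"
begin

abbreviation "ob i \<equiv> sh S (hr i)"
abbreviation "cp a b i \<equiv> cmp C (ob i) (ob (act b i)) (ob (act a (act b i))) (f a (act b i)) (f b i)"

lemma f_iso: assumes i: "i \<in> I" and a: "a \<in> carrier H" shows "iso_deg C a (ob i) (ob (act a i)) (f a i)"
proof -
  obtain g where g: "iso_deg C a (ob i) (ob (act a i)) g"
    using iso_between[OF hr_c[OF i] hr_c[OF act_I[OF i a]] a act_stab[OF i a]] by blast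
  show ?thesis using gen_is_iso[OF endo_shift[OF hr_c[OF i]] a g fgen[OF i a]] .
qed

lemma f_c: "i \<in> I \<Longrightarrow> a \<in> carrier H \<Longrightarrow> f a i \<in> carrier (HomM C (ob i) (ob (act a i)))"
  using iso_carr f_iso by blast

lemma cp_iso: assumes a: "a \<in> carrier H" and b: "b \<in> carrier H" and i: "i \<in> I"
  shows "iso_deg C (a \<otimes>\<^bsub>H\<^esub> b) (ob i) (ob (act (a \<otimes>\<^bsub>H\<^esub> b) i)) (cp a b i)"
  using iso_comp[OF f_iso[OF i b] f_iso[OF act_I[OF i b] a] b a] act_mult[OF a b i] by simp

lemma cp_gen: assumes a: "a \<in> carrier H" and b: "b \<in> carrier H" and i: "i \<in> I"
  shows "free_generator R (HomM C (ob i) (ob (act (a \<otimes>\<^bsub>H\<^esub> b) i))) (Hg C (ob i) (ob (act (a \<otimes>\<^bsub>H\<^esub> b) i)) (a \<otimes>\<^bsub>H\<^esub> b)) (cp a b i)"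
proof -
  interpret H: group H by (rule gH)
  show ?thesis using gen_of_iso[OF endo_shift[OF hr_c[OF i]] _ cp_iso[OF a b i]] a b by simp
qed

definition psi :: "'h \<Rightarrow> 'h \<Rightarrow> 'h set \<Rightarrow> 'r" where
  "psi a b D = (let i = (SOME i. i \<in> I \<and> D = l_coset H (hr i) LL) in
     SOME r. r \<in> carrier R \<and> f (a \<otimes>\<^bsub>H\<^esub> b) i = r \<odot>\<^bsub>HomM C (ob i) (ob (act (a \<otimes>\<^bsub>H\<^esub> b) i))\<^esub> cp a b i)"

lemma psi_eq: assumes a: "a \<in> carrier H" and b: "b \<in> carrier H" and i: "i \<in> I"
  shows "psi a b (l_coset H (hr i) LL) \<in> carrier R \<and>
    f (a \<otimes>\<^bsub>H\<^esub> b) i = psi a b (l_coset H (hr i) LL) \<odot>\<^bsub>HomM C (ob i) (ob (act (a \<otimes>\<^bsub>H\<^esub> b) i))\<^esub> cp a b i"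
proof -
  interpret H: group H by (rule gH)
  have si: "(SOME i'. i' \<in> I \<and> l_coset H (hr i) LL = l_coset H (hr i') LL) = i"
    using i rep_unique by (intro some_equality) auto
  have ab: "a \<otimes>\<^bsub>H\<^esub> b \<in> carrier H" using a b by simp
  have "\<exists>r. r \<in> carrier R \<and> f (a \<otimes>\<^bsub>H\<^esub> b) i = r \<odot>\<^bsub>HomM C (ob i) (ob (act (a \<otimes>\<^bsub>H\<^esub> b) i))\<^esub> cp a b i"
    using fg_surj[OF cp_gen[OF a b i] fg_in[OF fgen[OF i ab]]] by blast
  then show ?thesis unfolding psi_def Let_def si by (rule someI_ex)
qed

lemma psi_unit: assumes a: "a \<in> carrier H" and b: "b \<in> carrier H" and i: "i \<in> I"
  shows "psi a b (l_coset H (hr i) LL) \<in> Units R"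
proof -
  interpret H: group H by (rule gH)
  have ab: "a \<otimes>\<^bsub>H\<^esub> b \<in> carrier H" using a b by simp
  show ?thesis using gen_unit[OF modM _ cp_gen[OF a b i] fgen[OF i ab]] psi_eq[OF a b i] Hg_carr[OF ab] by blast
qed

lemma psi_units: "a \<in> carrier H \<Longrightarrow> b \<in> carrier H \<Longrightarrow> D \<in> left_cosets_of H LL \<Longrightarrow> psi a b D \<in> Units R"
  using cos_L psi_unit by blast

lemma psi_uniq:
  assumes a: "a \<in> carrier H" and b: "b \<in> carrier H" and D: "D \<in> left_cosets_of H LL"
    and eq: "\<forall>a\<in>carrier H. \<forall>b\<in>carrier H. \<forall>i\<in>I.
                  f (a \<otimes>\<^bsub>H\<^esub> b) i = \<psi>' a b (l_coset H (hr i) LL) \<odot>\<^bsub>HomM C (ob i) (ob (act (a \<otimes>\<^bsub>H\<^esub> b) i))\<^esub> cp a b i"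
    and un: "\<forall>a\<in>carrier H. \<forall>b\<in>carrier H. \<forall>D\<in>left_cosets_of H LL. \<psi>' a b D \<in> Units R"
  shows "\<psi>' a b D = psi a b D"
proof -
  obtain i where i: "i \<in> I" "D = l_coset H (hr i) LL" using cos_L[OF D] by blast
  have c': "\<psi>' a b D \<in> carrier R" using un a b D unfolding Units_def by blast
  show ?thesis using fg_inj[OF cp_gen[OF a b i(1)] c' conjunct1[OF psi_eq[OF a b i(1)]]]
    eq a b i psi_eq[OF a b i(1)] by metis
qed

lemma psi_norm1: assumes h: "h \<in> carrier H" and i: "i \<in> I"
  shows "psi \<one>\<^bsub>H\<^esub> h (l_coset H (hr i) LL) = \<one>\<^bsub>R\<^esub>"
proof -
  interpret H: group H by (rule gH)
  interpret R: cring R by (rule cR)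
  have hi: "act h i \<in> I" using act_I[OF i h] .
  note e = psi_eq[OF H.one_closed h i]
  have "cp \<one>\<^bsub>H\<^esub> h i = f h i" using f1[OF hi] f_c[OF i h] act_one[OF hi] by simp
  then have "\<one>\<^bsub>R\<^esub> \<odot>\<^bsub>HomM C (ob i) (ob (act h i))\<^esub> f h i = psi \<one>\<^bsub>H\<^esub> h (l_coset H (hr i) LL) \<odot>\<^bsub>HomM C (ob i) (ob (act h i))\<^esub> f h i"
    using e h module.smult_one[OF modM f_c[OF i h]] by simp
  then show ?thesis using fg_inj[OF fgen[OF i h] R.one_closed] e by metis
qed

lemma psi_norm2: assumes h: "h \<in> carrier H" and i: "i \<in> I"
  shows "psi h \<one>\<^bsub>H\<^esub> (l_coset H (hr i) LL) = \<one>\<^bsub>R\<^esub>"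
proof -
  interpret H: group H by (rule gH)
  interpret R: cring R by (rule cR)
  note e = psi_eq[OF h H.one_closed i]
  have "cp h \<one>\<^bsub>H\<^esub> i = f h i" using f1[OF i] f_c[OF i h] act_one[OF i] by simp
  then have "\<one>\<^bsub>R\<^esub> \<odot>\<^bsub>HomM C (ob i) (ob (act h i))\<^esub> f h i = psi h \<one>\<^bsub>H\<^esub> (l_coset H (hr i) LL) \<odot>\<^bsub>HomM C (ob i) (ob (act h i))\<^esub> f h i"
    using e h module.smult_one[OF modM f_c[OF i h]] by simp
  then show ?thesis using fg_inj[OF fgen[OF i h] R.one_closed] e by metis
qed


lemma psi_rel: assumes a: "a \<in> carrier H" and b: "b \<in> carrier H" and c: "c \<in> carrier H" and i: "i \<in> I"
  shows "psi (a \<otimes>\<^bsub>H\<^esub> b) c (l_coset H (hr i) LL) \<otimes>\<^bsub>R\<^esub> psi a b (l_coset H (hr (act c i)) LL) =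
         psi a (b \<otimes>\<^bsub>H\<^esub> c) (l_coset H (hr i) LL) \<otimes>\<^bsub>R\<^esub> psi b c (l_coset H (hr i) LL)"
proof -
  interpret H: group H by (rule gH)
  interpret R: cring R by (rule cR)
  define j where "j = act c i"
  define k where "k = act b j"
  define l where "l = act a k"
  have j: "j \<in> I" unfolding j_def using act_I[OF i c] .
  have k: "k \<in> I" unfolding k_def using act_I[OF j b] .
  have l: "l \<in> I" unfolding l_def using act_I[OF k a] .
  have ab: "a \<otimes>\<^bsub>H\<^esub> b \<in> carrier H" and bc: "b \<otimes>\<^bsub>H\<^esub> c \<in> carrier H" using a b c by auto
  have e1: "act (a \<otimes>\<^bsub>H\<^esub> b) j = l" unfolding l_def k_def using act_mult[OF a b j] .
  have e2: "act (a \<otimes>\<^bsub>H\<^esub> b \<otimes>\<^bsub>H\<^esub> c) i = l" using act_mult[OF ab c i] e1 unfolding j_def by simp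
  have e3: "act (b \<otimes>\<^bsub>H\<^esub> c) i = k" unfolding k_def j_def using act_mult[OF b c i] .
  have e4: "act (a \<otimes>\<^bsub>H\<^esub> (b \<otimes>\<^bsub>H\<^esub> c)) i = l" using act_mult[OF a bc i] e3 unfolding l_def by simp
  have abc: "a \<otimes>\<^bsub>H\<^esub> b \<otimes>\<^bsub>H\<^esub> c = a \<otimes>\<^bsub>H\<^esub> (b \<otimes>\<^bsub>H\<^esub> c)" using a b c by (simp add: H.m_assoc)
  have fc: "f c i \<in> carrier (HomM C (ob i) (ob j))" using f_c[OF i c] unfolding j_def .
  have fb: "f b j \<in> carrier (HomM C (ob j) (ob k))" using f_c[OF j b] unfolding k_def .
  have fa: "f a k \<in> carrier (HomM C (ob k) (ob l))" using f_c[OF k a] unfolding l_def .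
  define T where "T = cmp C (ob i) (ob k) (ob l) (f a k) (cmp C (ob i) (ob j) (ob k) (f b j) (f c i))"
  have Tiso: "iso_deg C (a \<otimes>\<^bsub>H\<^esub> (b \<otimes>\<^bsub>H\<^esub> c)) (ob i) (ob l) T"
  proof -
    have "iso_deg C (b \<otimes>\<^bsub>H\<^esub> c) (ob i) (ob k) (cmp C (ob i) (ob j) (ob k) (f b j) (f c i))"
      using iso_comp[OF f_iso[OF i c] f_iso[OF act_I[OF i c] b] c b] unfolding k_def j_def .
    from iso_comp[OF this f_iso[OF k a] bc a] show ?thesis unfolding T_def l_def .
  qed
  have Tgen: "free_generator R (HomM C (ob i) (ob l)) (Hg C (ob i) (ob l) (a \<otimes>\<^bsub>H\<^esub> (b \<otimes>\<^bsub>H\<^esub> c))) T"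
    using gen_of_iso[OF endo_shift[OF hr_c[OF i]] _ Tiso] a bc by simp
  define p1 where "p1 = psi b c (l_coset H (hr i) LL)"
  define p2 where "p2 = psi (a \<otimes>\<^bsub>H\<^esub> b) c (l_coset H (hr i) LL)"
  define p3 where "p3 = psi a (b \<otimes>\<^bsub>H\<^esub> c) (l_coset H (hr i) LL)"
  define p4 where "p4 = psi a b (l_coset H (hr j) LL)"
  have P1: "p1 \<in> carrier R" "f (b \<otimes>\<^bsub>H\<^esub> c) i = p1 \<odot>\<^bsub>HomM C (ob i) (ob k)\<^esub> cmp C (ob i) (ob j) (ob k) (f b j) (f c i)"
    using psi_eq[OF b c i] e3 unfolding p1_def j_def k_def by auto
  have P2: "p2 \<in> carrier R" "f (a \<otimes>\<^bsub>H\<^esub> b \<otimes>\<^bsub>H\<^esub> c) i = p2 \<odot>\<^bsub>HomM C (ob i) (ob l)\<^esub> cmp C (ob i) (ob j) (ob l) (f (a \<otimes>\<^bsub>H\<^esub> b) j) (f c i)"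
    using psi_eq[OF ab c i] e2 e1 unfolding p2_def j_def by auto
  have P3: "p3 \<in> carrier R" "f (a \<otimes>\<^bsub>H\<^esub> (b \<otimes>\<^bsub>H\<^esub> c)) i = p3 \<odot>\<^bsub>HomM C (ob i) (ob l)\<^esub> cmp C (ob i) (ob k) (ob l) (f a k) (f (b \<otimes>\<^bsub>H\<^esub> c) i)"
  proof -
    have e5: "act a k = l" unfolding l_def ..
    show "p3 \<in> carrier R" using psi_eq[OF a bc i] unfolding p3_def by blast
    show "f (a \<otimes>\<^bsub>H\<^esub> (b \<otimes>\<^bsub>H\<^esub> c)) i = p3 \<odot>\<^bsub>HomM C (ob i) (ob l)\<^esub> cmp C (ob i) (ob k) (ob l) (f a k) (f (b \<otimes>\<^bsub>H\<^esub> c) i)"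
      using conjunct2[OF psi_eq[OF a bc i]] unfolding p3_def e3 e4 e5 .
  qed
  have P4: "p4 \<in> carrier R" "f (a \<otimes>\<^bsub>H\<^esub> b) j = p4 \<odot>\<^bsub>HomM C (ob j) (ob l)\<^esub> cmp C (ob j) (ob k) (ob l) (f a k) (f b j)"
    using psi_eq[OF a b j] e1 unfolding p4_def k_def l_def by auto
  have fbfc: "cmp C (ob i) (ob j) (ob k) (f b j) (f c i) \<in> carrier (HomM C (ob i) (ob k))" using fb fc by simp
  have fafb: "cmp C (ob j) (ob k) (ob l) (f a k) (f b j) \<in> carrier (HomM C (ob j) (ob l))" using fa fb by simp
  have L: "f (a \<otimes>\<^bsub>H\<^esub> b \<otimes>\<^bsub>H\<^esub> c) i = (p2 \<otimes>\<^bsub>R\<^esub> p4) \<odot>\<^bsub>HomM C (ob i) (ob l)\<^esub> T"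
  proof -
    have "f (a \<otimes>\<^bsub>H\<^esub> b \<otimes>\<^bsub>H\<^esub> c) i = p2 \<odot>\<^bsub>HomM C (ob i) (ob l)\<^esub> (p4 \<odot>\<^bsub>HomM C (ob i) (ob l)\<^esub>
        cmp C (ob i) (ob j) (ob l) (cmp C (ob j) (ob k) (ob l) (f a k) (f b j)) (f c i))"
      using P2(2) P4 sm_l[OF fc fafb P4(1)] by simp
    also have "cmp C (ob i) (ob j) (ob l) (cmp C (ob j) (ob k) (ob l) (f a k) (f b j)) (f c i) = T"
      unfolding T_def using assoc[OF fc fb fa] by simp
    finally show ?thesis using module.smult_assoc1[OF modM P2(1) P4(1)] Tiso iso_carr a bc
      by (metis H.m_closed)
  qed
  have Rr: "f (a \<otimes>\<^bsub>H\<^esub> (b \<otimes>\<^bsub>H\<^esub> c)) i = (p3 \<otimes>\<^bsub>R\<^esub> p1) \<odot>\<^bsub>HomM C (ob i) (ob l)\<^esub> T"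
  proof -
    have "f (a \<otimes>\<^bsub>H\<^esub> (b \<otimes>\<^bsub>H\<^esub> c)) i = p3 \<odot>\<^bsub>HomM C (ob i) (ob l)\<^esub> (p1 \<odot>\<^bsub>HomM C (ob i) (ob l)\<^esub> T)"
      using P3(2) P1 sm_r[OF fbfc fa P1(1)] unfolding T_def by simp
    then show ?thesis using module.smult_assoc1[OF modM P3(1) P1(1)] Tiso iso_carr a bc
      by (metis H.m_closed)
  qed
  have "p2 \<otimes>\<^bsub>R\<^esub> p4 = p3 \<otimes>\<^bsub>R\<^esub> p1"
    using fg_inj[OF Tgen _ _] L Rr abc P1(1) P2(1) P3(1) P4(1) by simp
  then show ?thesis unfolding p1_def p2_def p3_def p4_def j_def .
qed

lemma psi_cocycle: "normalised_2cocycle R H LL psi"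
  unfolding normalised_2cocycle_def
proof (intro conjI ballI)
  interpret H: group H by (rule gH)
  interpret R: cring R by (rule cR)
  fix a b D assume a: "a \<in> carrier H" and b: "b \<in> carrier H" and D: "D \<in> left_cosets_of H LL"
  show "psi a b D \<in> Units R" using psi_units[OF a b D] .
next
  fix h D assume h: "h \<in> carrier H" and D: "D \<in> left_cosets_of H LL"
  obtain i where i: "i \<in> I" "D = l_coset H (hr i) LL" using cos_L[OF D] by blast
  show "psi \<one>\<^bsub>H\<^esub> h D = \<one>\<^bsub>R\<^esub>" using psi_norm1[OF h i(1)] i(2) by simp
  show "psi h \<one>\<^bsub>H\<^esub> D = \<one>\<^bsub>R\<^esub>" using psi_norm2[OF h i(1)] i(2) by simp
next
  interpret H: group H by (rule gH)
  interpret R: cring R by (rule cR)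
  fix a b c D assume a: "a \<in> carrier H" and b: "b \<in> carrier H" and c: "c \<in> carrier H" and D: "D \<in> left_cosets_of H LL"
  obtain i where i: "i \<in> I" "D = l_coset H (hr i) LL" using cos_L[OF D] by blast
  have ab: "a \<otimes>\<^bsub>H\<^esub> b \<in> carrier H" and bc: "b \<otimes>\<^bsub>H\<^esub> c \<in> carrier H" using a b c by auto
  have ci: "act c i \<in> I" using act_I[OF i(1) c] .
  have cD: "l_coset H c D = l_coset H (hr (act c i)) LL" using cos_act[OF i(1) c] i(2) by simp
  show "psi b c D \<otimes>\<^bsub>R\<^esub> inv\<^bsub>R\<^esub> psi (a \<otimes>\<^bsub>H\<^esub> b) c D \<otimes>\<^bsub>R\<^esub> psi a (b \<otimes>\<^bsub>H\<^esub> c) D \<otimes>\<^bsub>R\<^esub>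
          inv\<^bsub>R\<^esub> psi a b (l_coset H c D) = \<one>\<^bsub>R\<^esub>"
    unfolding i(2) cos_act[OF i(1) c]
    using R.cocyc_alg[OF psi_unit[OF b c i(1)] psi_unit[OF ab c i(1)] psi_unit[OF a bc i(1)] psi_unit[OF a b ci]
       psi_rel[OF a b c i(1)]] .
qed

end

theorem mainTheorem9:
  fixes R :: "('r, 'a) ring_scheme" and H :: "('h, 'b) monoid_scheme"
    and G :: "('g, 'c) monoid_scheme" and \<tau> :: "'h \<Rightarrow> 'g"
    and C :: "('o, 'm, 'r, 'h, 'g, 'z) gcat_scheme"
    and sh :: "'o \<Rightarrow> 'h \<Rightarrow> 'o" and rs :: "'o \<Rightarrow> 'h \<Rightarrow> 'm" and S :: 'o
  assumes "cring R" and "\<one>\<^bsub>R\<^esub> \<noteq> \<zero>\<^bsub>R\<^esub>"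
    and "group H" and "group G" and "\<tau> \<in> hom H G"
    and "tau_graded_cat R H G \<tau> C"
    and "has_shifts H C sh rs"
    and "S \<in> Hmg C" and "simple_obj R H C S"
  shows "subgroup (stab H C sh S) H \<and> stab H C sh S \<subseteq> kernel H G \<tau> \<and>
    (\<forall>(I :: 'i set) hr. coset_reps H (stab H C sh S) I hr \<longrightarrow>
      (let L = stab H C sh S; act = coset_act H L I hr;
           M = (\<lambda>i j. HomM C (sh S (hr i)) (sh S (hr j)));
           Hom = (\<lambda>a i j. Hg C (sh S (hr i)) (sh S (hr j)) a) in
       (\<forall>i\<in>I. \<forall>a\<in>carrier H. \<exists>g. free_generator R (M i (act a i)) (Hom a i (act a i)) g) \<and>
       (\<forall>f. (\<forall>i\<in>I. \<forall>a\<in>carrier H. free_generator R (M i (act a i)) (Hom a i (act a i)) (f a i)) \<and>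
            (\<forall>i\<in>I. f \<one>\<^bsub>H\<^esub> i = idm C (sh S (hr i))) \<longrightarrow>
         (\<exists>\<psi>. (\<forall>a\<in>carrier H. \<forall>b\<in>carrier H. \<forall>i\<in>I.
                  f (a \<otimes>\<^bsub>H\<^esub> b) i = \<psi> a b (l_coset H (hr i) L) \<odot>\<^bsub>M i (act (a \<otimes>\<^bsub>H\<^esub> b) i)\<^esub>
                     cmp C (sh S (hr i)) (sh S (hr (act b i))) (sh S (hr (act a (act b i))))
                       (f a (act b i)) (f b i)) \<and>
               (\<forall>a\<in>carrier H. \<forall>b\<in>carrier H. \<forall>D\<in>left_cosets_of H L. \<psi> a b D \<in> Units R) \<and>
               (\<forall>\<psi>'. ((\<forall>a\<in>carrier H. \<forall>b\<in>carrier H. \<forall>i\<in>I.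
                  f (a \<otimes>\<^bsub>H\<^esub> b) i = \<psi>' a b (l_coset H (hr i) L) \<odot>\<^bsub>M i (act (a \<otimes>\<^bsub>H\<^esub> b) i)\<^esub>
                     cmp C (sh S (hr i)) (sh S (hr (act b i))) (sh S (hr (act a (act b i))))
                       (f a (act b i)) (f b i)) \<and>
                  (\<forall>a\<in>carrier H. \<forall>b\<in>carrier H. \<forall>D\<in>left_cosets_of H L. \<psi>' a b D \<in> Units R)) \<longrightarrow>
                  (\<forall>a\<in>carrier H. \<forall>b\<in>carrier H. \<forall>D\<in>left_cosets_of H L. \<psi>' a b D = \<psi> a b D)) \<and>
               normalised_2cocycle R H L \<psi>))))"
proof -
  interpret c1: ctx R H G \<tau> C
    by (intro ctx.intro) (use assms in auto)
  interpret c2: ctx2 R H G \<tau> C sh rs S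
    by (intro ctx2.intro ctx.intro ctx2_axioms.intro) (use assms in auto)
  show ?thesis
  proof (intro conjI allI impI)
    show "subgroup (stab H C sh S) H" by (rule c2.stab_sub)
    show "stab H C sh S \<subseteq> kernel H G \<tau>" by (rule c2.stab_ker)
  next
    fix I :: "'i set" and hr
    assume cr: "coset_reps H (stab H C sh S) I hr"
    interpret c3: ctx3 R H G \<tau> C sh rs S I hr
      by (intro ctx3.intro ctx3_axioms.intro ctx2.intro ctx.intro ctx2_axioms.intro) (use assms cr in auto)
    show "let L = stab H C sh S; act = coset_act H L I hr;
           M = (\<lambda>i j. HomM C (sh S (hr i)) (sh S (hr j)));
           Hom = (\<lambda>a i j. Hg C (sh S (hr i)) (sh S (hr j)) a) in
       (\<forall>i\<in>I. \<forall>a\<in>carrier H. \<exists>g. free_generator R (M i (act a i)) (Hom a i (act a i)) g) \<and>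
       (\<forall>f. (\<forall>i\<in>I. \<forall>a\<in>carrier H. free_generator R (M i (act a i)) (Hom a i (act a i)) (f a i)) \<and>
            (\<forall>i\<in>I. f \<one>\<^bsub>H\<^esub> i = idm C (sh S (hr i))) \<longrightarrow>
         (\<exists>\<psi>. (\<forall>a\<in>carrier H. \<forall>b\<in>carrier H. \<forall>i\<in>I.
                  f (a \<otimes>\<^bsub>H\<^esub> b) i = \<psi> a b (l_coset H (hr i) L) \<odot>\<^bsub>M i (act (a \<otimes>\<^bsub>H\<^esub> b) i)\<^esub>
                     cmp C (sh S (hr i)) (sh S (hr (act b i))) (sh S (hr (act a (act b i))))
                       (f a (act b i)) (f b i)) \<and>
               (\<forall>a\<in>carrier H. \<forall>b\<in>carrier H. \<forall>D\<in>left_cosets_of H L. \<psi> a b D \<in> Units R) \<and>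
               (\<forall>\<psi>'. ((\<forall>a\<in>carrier H. \<forall>b\<in>carrier H. \<forall>i\<in>I.
                  f (a \<otimes>\<^bsub>H\<^esub> b) i = \<psi>' a b (l_coset H (hr i) L) \<odot>\<^bsub>M i (act (a \<otimes>\<^bsub>H\<^esub> b) i)\<^esub>
                     cmp C (sh S (hr i)) (sh S (hr (act b i))) (sh S (hr (act a (act b i))))
                       (f a (act b i)) (f b i)) \<and>
                  (\<forall>a\<in>carrier H. \<forall>b\<in>carrier H. \<forall>D\<in>left_cosets_of H L. \<psi>' a b D \<in> Units R)) \<longrightarrow>
                  (\<forall>a\<in>carrier H. \<forall>b\<in>carrier H. \<forall>D\<in>left_cosets_of H L. \<psi>' a b D = \<psi> a b D)) \<and>
               normalised_2cocycle R H L \<psi>))"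
      unfolding Let_def
    proof (intro conjI allI impI ballI)
      fix i a assume i: "i \<in> I" and a: "a \<in> carrier H"
      obtain g where g: "iso_deg C a (sh S (hr i)) (sh S (hr (c3.act a i))) g"
        using c2.iso_between[OF c3.hr_c[OF i] c3.hr_c[OF c3.act_I[OF i a]] a c3.act_stab[OF i a]] by blast
      show "\<exists>g. free_generator R (HomM C (sh S (hr i)) (sh S (hr (c3.act a i))))
               (Hg C (sh S (hr i)) (sh S (hr (c3.act a i))) a) g"
        using c1.gen_of_iso[OF c2.endo_shift[OF c3.hr_c[OF i]] a g] by blast
    next
      fix f
      assume hyp: "(\<forall>i\<in>I. \<forall>a\<in>carrier H. free_generator R (HomM C (sh S (hr i)) (sh S (hr (c3.act a i))))
               (Hg C (sh S (hr i)) (sh S (hr (c3.act a i))) a) (f a i)) \<and>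
            (\<forall>i\<in>I. f \<one>\<^bsub>H\<^esub> i = idm C (sh S (hr i)))"
      interpret c4: ctx4 R H G \<tau> C sh rs S I hr f
        by (intro ctx4.intro ctx4_axioms.intro ctx3.intro ctx3_axioms.intro ctx2.intro ctx.intro ctx2_axioms.intro)
          (use assms cr hyp in auto)
      show "\<exists>\<psi>. (\<forall>a\<in>carrier H. \<forall>b\<in>carrier H. \<forall>i\<in>I.
                  f (a \<otimes>\<^bsub>H\<^esub> b) i = \<psi> a b (l_coset H (hr i) c3.LL) \<odot>\<^bsub>HomM C (sh S (hr i)) (sh S (hr (c3.act (a \<otimes>\<^bsub>H\<^esub> b) i)))\<^esub>
                     cmp C (sh S (hr i)) (sh S (hr (c3.act b i))) (sh S (hr (c3.act a (c3.act b i))))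
                       (f a (c3.act b i)) (f b i)) \<and>
               (\<forall>a\<in>carrier H. \<forall>b\<in>carrier H. \<forall>D\<in>left_cosets_of H c3.LL. \<psi> a b D \<in> Units R) \<and>
               (\<forall>\<psi>'. ((\<forall>a\<in>carrier H. \<forall>b\<in>carrier H. \<forall>i\<in>I.
                  f (a \<otimes>\<^bsub>H\<^esub> b) i = \<psi>' a b (l_coset H (hr i) c3.LL) \<odot>\<^bsub>HomM C (sh S (hr i)) (sh S (hr (c3.act (a \<otimes>\<^bsub>H\<^esub> b) i)))\<^esub>
                     cmp C (sh S (hr i)) (sh S (hr (c3.act b i))) (sh S (hr (c3.act a (c3.act b i))))
                       (f a (c3.act b i)) (f b i)) \<and>
                  (\<forall>a\<in>carrier H. \<forall>b\<in>carrier H. \<forall>D\<in>left_cosets_of H c3.LL. \<psi>' a b D \<in> Units R)) \<longrightarrow>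
                  (\<forall>a\<in>carrier H. \<forall>b\<in>carrier H. \<forall>D\<in>left_cosets_of H c3.LL. \<psi>' a b D = \<psi> a b D)) \<and>
               normalised_2cocycle R H c3.LL \<psi>"
      proof (intro exI[of _ c4.psi] conjI allI impI ballI)
        fix a b i assume "a \<in> carrier H" "b \<in> carrier H" "i \<in> I"
        then show "f (a \<otimes>\<^bsub>H\<^esub> b) i = c4.psi a b (l_coset H (hr i) c3.LL) \<odot>\<^bsub>HomM C (sh S (hr i)) (sh S (hr (c3.act (a \<otimes>\<^bsub>H\<^esub> b) i)))\<^esub>
                     cmp C (sh S (hr i)) (sh S (hr (c3.act b i))) (sh S (hr (c3.act a (c3.act b i))))
                       (f a (c3.act b i)) (f b i)"
          using c4.psi_eq by blast
      next
        fix a b D assume "a \<in> carrier H" "b \<in> carrier H" "D \<in> left_cosets_of H c3.LL"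
        then show "c4.psi a b D \<in> Units R" using c4.psi_units by blast
      next
        fix \<psi>' a b D
        assume h: "(\<forall>a\<in>carrier H. \<forall>b\<in>carrier H. \<forall>i\<in>I.
                  f (a \<otimes>\<^bsub>H\<^esub> b) i = \<psi>' a b (l_coset H (hr i) c3.LL) \<odot>\<^bsub>HomM C (sh S (hr i)) (sh S (hr (c3.act (a \<otimes>\<^bsub>H\<^esub> b) i)))\<^esub>
                     cmp C (sh S (hr i)) (sh S (hr (c3.act b i))) (sh S (hr (c3.act a (c3.act b i))))
                       (f a (c3.act b i)) (f b i)) \<and>
                  (\<forall>a\<in>carrier H. \<forall>b\<in>carrier H. \<forall>D\<in>left_cosets_of H c3.LL. \<psi>' a b D \<in> Units R)"
          and "a \<in> carrier H" "b \<in> carrier H" "D \<in> left_cosets_of H c3.LL"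
        then show "\<psi>' a b D = c4.psi a b D" using c4.psi_uniq by blast
      next
        show "normalised_2cocycle R H c3.LL c4.psi" by (rule c4.psi_cocycle)
      qed
    qed
  qed
qed

end
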